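(* Let $G=W(H_3)$, $\mu=1$, $\tau\in\mathbb C$, and let $R_1,\dots,R_5$ be the five classes of pairwise commuting reflections. Let $U=\bigoplus_{p=1}^5\mathbb Cu_p$, let $G$ act by $w(u_p)=u_q$ when $wR_pw^{-1}=R_q$, and for a reflection $s$ with $s\in R_{[s]}$ set $e_s(u_p)=\tau u_p$ if $s\in R_p$ and $e_s(u_p)=u_{[s]}$ if $s\notin R_p$. Then these operators extend to a representation $\rho_4$ of $B_G(\Upsilon)$ on $U$, and $\rho_4$ is irreducible if and only if $(\tau-1)^4(\tau+4)\neq0$.
   Context: $W(H_3)$ is the Coxeter group generated by $s_0,s_1,s_2$ with $s_i^2=1$, $(s_0s_1)^5=1$, $(s_0s_2)^2=1$, $(s_1s_2)^3=1$, realized as a real reflection group on $\mathbb C^3$; order 120, 15 reflections, all conjugate. Commuting is an equivalence relation on the reflections with 5 classes $R_1,\dots,R_5$ of 3 pairwise commuting reflections; $G$ permutes these classes transitively by conjugation. $e_s$ is the generator for the hyperplane of $s$; $T_w$ written $w$. Parameters: single $\mu=1$, single $\tau$. $B_G(\Upsilon)$ is the unital $\mathbb C$-algebra generated by $T_w$ ($T_1=1$) and $e_s$ with relations: $T_{w_1}T_{w_2}=T_{w_1w_2}$; $se_s=e_ss=e_s$; $T_we_s=e_sT_w=e_s$ if $w$ stabilizes $H_s$ and $H_s\cap V_w$ ($V_w$ the fixed space) is a noncrossing codimension-2 edge; $e_s^2=\tau e_s$; $we_s=e_{wsw^{-1}}w$; $e_se_{s'}=e_{s'}e_s$ if $H_s\pitchfork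 H_{s'}$; for $s\ne s'$ with $H_s\cap H_{s'}$ noncrossing, $e_se_{s'}=(\sum_{r\in R(s,s')}r)e_{s'}=e_s(\sum_{r\in R(s,s')}r)$, $R(s,s')=\{r: rs'r=s\}$, product $0$ if $R(s,s')=\emptyset$. $H_s\pitchfork H_{s'}$ means the only reflecting hyperplanes containing $H_s\cap H_{s'}$ are $H_s,H_{s'}$; a codimension-2 edge is crossing iff it is such an intersection. *)

theory Defs
  imports "HOL-Analysis.Analysis"
begin

type_synonym mat3 = "real^3^3"
type_synonym cls = "mat3 set"
type_synonym vecU = "cls \<Rightarrow> complex"

text \<open>Gram matrix of the standard bilinear form for the Coxeter matrix with
  m01 = 5, m02 = 2, m12 = 3: entries -cos(pi/m_ij), diagonal 1.\<close>
definition H3gram :: "3 \<Rightarrow> 3 \<Rightarrow> real" where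
  "H3gram i j = (if i = j then 1
     else if {i, j} = {0, 1} then - cos (pi / 5)
     else if {i, j} = {1, 2} then - cos (pi / 3)
     else 0)"

text \<open>Simple reflection s_i: v \<mapsto> v - 2 B(alpha_i, v) alpha_i (coordinates in basis alpha).\<close>
definition sgen :: "3 \<Rightarrow> mat3" where
  "sgen i = (\<chi> j k. (if j = k then 1 else 0) - (if j = i then 2 * H3gram i k else 0))"

inductive_set WH3 :: "mat3 set" where
  one: "mat 1 \<in> WH3"
| step: "g \<in> WH3 \<Longrightarrow> g ** sgen i \<in> WH3"

definition Refl :: "mat3 set" where
  "Refl = {w ** sgen i ** matrix_inv w | w i. w \<in> WH3}"

definition Fix :: "mat3 \<Rightarrow> (real^3) set" where
  "Fix w = {v. w *v v = v}"

abbreviation Hyp :: "mat3 \<Rightarrow> (real^3) set" where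
  "Hyp s \<equiv> Fix s"

text \<open>Codimension-2 edges of the arrangement (in rank 3 these are exactly the
  intersections of two distinct reflecting hyperplanes).\<close>
definition codim2_edge :: "(real^3) set \<Rightarrow> bool" where
  "codim2_edge X \<longleftrightarrow> (\<exists>s\<in>Refl. \<exists>s'\<in>Refl. Hyp s \<noteq> Hyp s' \<and> X = Hyp s \<inter> Hyp s')"

definition transversal :: "mat3 \<Rightarrow> mat3 \<Rightarrow> bool" where
  "transversal s s' \<longleftrightarrow> Hyp s \<noteq> Hyp s' \<and>
     (\<forall>r\<in>Refl. Hyp s \<inter> Hyp s' \<subseteq> Hyp r \<longrightarrow> Hyp r = Hyp s \<or> Hyp r = Hyp s')"

definition crossing_edge :: "(real^3) set \<Rightarrow> bool" where
  "crossing_edge X \<longleftrightarrow> (\<exists>s\<in>Refl. \<exists>s'\<in>Refl. transversal s s' \<and> X = Hyp s \<inter> Hyp s')"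

definition noncrossing_edge :: "(real^3) set \<Rightarrow> bool" where
  "noncrossing_edge X \<longleftrightarrow> codim2_edge X \<and> \<not> crossing_edge X"

definition stabilizes :: "mat3 \<Rightarrow> (real^3) set \<Rightarrow> bool" where
  "stabilizes w X \<longleftrightarrow> (\<lambda>v. w *v v) ` X = X"

definition Rset :: "mat3 \<Rightarrow> mat3 \<Rightarrow> mat3 set" where
  "Rset s s' = {r \<in> Refl. r ** s' ** r = s}"

definition cls_of :: "mat3 \<Rightarrow> cls" where
  "cls_of s = {r \<in> Refl. r ** s = s ** r}"

definition Classes :: "cls set" where
  "Classes = cls_of ` Refl"

text \<open>U = free C-module on the classes, as functions supported on Classes.\<close>
definition Uspace :: "vecU set" where
  "Uspace = {v. \<forall>q. q \<notin> Classes \<longrightarrow> v q = 0}"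

text \<open>Linear operator on U sending u_p to img p.\<close>
definition lin_op :: "(cls \<Rightarrow> vecU) \<Rightarrow> vecU \<Rightarrow> vecU" where
  "lin_op img v = (\<lambda>q. if q \<in> Classes then (\<Sum>p\<in>Classes. v p * img p q) else 0)"

definition ubasis :: "cls \<Rightarrow> vecU" where
  "ubasis p = (\<lambda>q. if q = p then 1 else 0)"

definition T4 :: "mat3 \<Rightarrow> vecU \<Rightarrow> vecU" where
  "T4 w = lin_op (\<lambda>p. ubasis ((\<lambda>r. w ** r ** matrix_inv w) ` p))"

definition E4 :: "complex \<Rightarrow> mat3 \<Rightarrow> vecU \<Rightarrow> vecU" where
  "E4 \<tau> s = lin_op (\<lambda>p. if s \<in> p then (\<lambda>q. \<tau> * ubasis p q) else ubasis (cls_of s))"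

text \<open>An assignment T (for T_w) and E (for e_s) of operators on U satisfies all
  defining relations of B_G(Upsilon), i.e. extends to an algebra representation.\<close>
definition is_rep :: "complex \<Rightarrow> (mat3 \<Rightarrow> vecU \<Rightarrow> vecU) \<Rightarrow> (mat3 \<Rightarrow> vecU \<Rightarrow> vecU) \<Rightarrow> bool" where
  "is_rep \<tau> T E \<longleftrightarrow>
     (\<forall>w\<in>WH3. \<forall>v\<in>Uspace. T w v \<in> Uspace) \<and>
     (\<forall>s\<in>Refl. \<forall>v\<in>Uspace. E s v \<in> Uspace) \<and>
     (\<forall>v\<in>Uspace. T (mat 1) v = v) \<and>
     (\<forall>w1\<in>WH3. \<forall>w2\<in>WH3. \<forall>v\<in>Uspace. T w1 (T w2 v) = T (w1 ** w2) v) \<and>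
     (\<forall>s\<in>Refl. \<forall>v\<in>Uspace. T s (E s v) = E s v \<and> E s (T s v) = E s v) \<and>
     (\<forall>w\<in>WH3. \<forall>s\<in>Refl. stabilizes w (Hyp s) \<and> noncrossing_edge (Hyp s \<inter> Fix w) \<longrightarrow>
        (\<forall>v\<in>Uspace. T w (E s v) = E s v \<and> E s (T w v) = E s v)) \<and>
     (\<forall>s\<in>Refl. \<forall>v\<in>Uspace. E s (E s v) = (\<lambda>q. \<tau> * E s v q)) \<and>
     (\<forall>w\<in>WH3. \<forall>s\<in>Refl. \<forall>v\<in>Uspace. T w (E s v) = E (w ** s ** matrix_inv w) (T w v)) \<and>
     (\<forall>s\<in>Refl. \<forall>s'\<in>Refl. transversal s s' \<longrightarrow>
        (\<forall>v\<in>Uspace. E s (E s' v) = E s' (E s v))) \<and>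
     (\<forall>s\<in>Refl. \<forall>s'\<in>Refl. s \<noteq> s' \<and> noncrossing_edge (Hyp s \<inter> Hyp s') \<longrightarrow>
        (\<forall>v\<in>Uspace.
           E s (E s' v) = (\<lambda>q. \<Sum>r\<in>Rset s s'. T r (E s' v) q) \<and>
           E s (E s' v) = E s (\<lambda>q. \<Sum>r\<in>Rset s s'. T r v q)))"

definition csubspace :: "vecU set \<Rightarrow> bool" where
  "csubspace W \<longleftrightarrow> (\<lambda>_. 0) \<in> W \<and> (\<forall>x\<in>W. \<forall>y\<in>W. (\<lambda>q. x q + y q) \<in> W) \<and>
     (\<forall>c. \<forall>x\<in>W. (\<lambda>q. c * x q) \<in> W)"

text \<open>Irreducible: the only subspaces of U invariant under all generators
  T_w and e_s (hence under the whole algebra) are 0 and U.\<close>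
definition rep_irreducible :: "(mat3 \<Rightarrow> vecU \<Rightarrow> vecU) \<Rightarrow> (mat3 \<Rightarrow> vecU \<Rightarrow> vecU) \<Rightarrow> bool" where
  "rep_irreducible T E \<longleftrightarrow> Uspace \<noteq> {\<lambda>_. 0} \<and>
     (\<forall>W. csubspace W \<and> W \<subseteq> Uspace \<and> (\<forall>w\<in>WH3. \<forall>v\<in>W. T w v \<in> W) \<and>
          (\<forall>s\<in>Refl. \<forall>v\<in>W. E s v \<in> W) \<longrightarrow> W = {\<lambda>_. 0} \<or> W = Uspace)"

end

theory Submission
  imports Defs
begin
definition phi :: real where "phi = 2 * cos (pi / 5)"

lemma phi_sq: "phi * phi = phi + 1"
proof -
  define c where "c = cos (pi/5)"
  have c3: "cos (3 * (pi/5)) = 4 * c ^ 3 - 3 * c" unfolding c_def by (rule cos_treble_cos)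
  have c2: "cos (2 * (pi/5)) = 2 * c ^ 2 - 1" unfolding c_def by (rule cos_double_cos)
  have e: "3 * (pi/5) = pi - 2 * (pi/5)" by simp
  have "cos (3 * (pi/5)) = - cos (2*(pi/5))" by (subst e, rule cos_pi_minus)
  then have eq: "4 * c ^ 3 - 3 * c = - (2 * c ^ 2 - 1)" using c3 c2 by simp
  have "c > 0" unfolding c_def by (rule cos_gt_zero_pi) (use pi_gt_zero in linarith)+
  have "(c + 1) * (4 * c^2 - 2*c - 1) = 0" using eq by (simp add: algebra_simps power2_eq_square power3_eq_cube)
  with \<open>c > 0\<close> have "4 * c^2 - 2*c - 1 = 0" by simp
  then show ?thesis unfolding phi_def c_def[symmetric] by (simp add: algebra_simps power2_eq_square)
qed

lemma int_quad_zero: "(a::int)^2 + a*b - b^2 = 0 \<Longrightarrow> a = 0 \<and> b = 0"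
proof (induction "nat (\<bar>a\<bar> + \<bar>b\<bar>)" arbitrary: a b rule: less_induct)
  case less
  show ?case
  proof (cases "a = 0 \<and> b = 0")
    case True then show ?thesis by simp
  next
    case False
    have ev: "even a \<and> even b"
    proof (rule ccontr)
      assume "\<not> (even a \<and> even b)"
      then have "odd (a^2 + a*b - b^2)" by auto
      with less.prems show False by simp
    qed
    then obtain a' b' where ab: "a = 2*a'" "b = 2*b'" by (auto elim!: evenE)
    have "4 * (a'^2 + a'*b' - b'^2) = 0" using less.prems ab by (simp add: algebra_simps power2_eq_square)
    then have h: "a'^2 + a'*b' - b'^2 = 0" by simp
    have "nat (\<bar>a'\<bar> + \<bar>b'\<bar>) < nat (\<bar>a\<bar> + \<bar>b\<bar>)" using False ab by auto
    from less.hyps[OF this h] ab False show ?thesis by simp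
  qed
qed

lemma phi_indep: "of_int a + of_int b * phi = 0 \<Longrightarrow> a = 0 \<and> b = 0"
proof -
  assume h: "of_int a + of_int b * phi = 0"
  define A :: real where "A = of_int a"
  define B :: real where "B = of_int b"
  have h1: "B * phi = - A" using h unfolding A_def B_def by (simp add: add_eq_0_iff)
  have e1: "(B * phi) * (B * phi) = B * B * (phi * phi)" by (simp only: mult_ac)
  have "(B * phi) * (B * phi) = A * A" using h1 by simp
  then have "B * B * (phi + 1) = A * A" using e1 phi_sq by simp
  then have "B * (B * phi) + B * B = A * A" by (simp add: distrib_left mult_ac)
  then have "B * (- A) + B * B = A * A" using h1 by simp
  then have "of_int (a^2 + a*b - b^2) = (0::real)" unfolding A_def B_def by (simp add: algebra_simps power2_eq_square)
  then have "a^2 + a*b - b^2 = 0" by (simp only: of_int_eq_0_iff)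
  then show ?thesis by (rule int_quad_zero)
qed

type_synonym zp = "int \<times> int"
type_synonym zm = "zp list list"
type_synonym zv = "zp list"
fun zadd :: "zp \<Rightarrow> zp \<Rightarrow> zp" where "zadd (a,b) (c,d) = (a+c, b+d)"
fun zmul :: "zp \<Rightarrow> zp \<Rightarrow> zp" where "zmul (a,b) (c,d) = (a*c + b*d, a*d + b*c + b*d)"
definition zr :: "zp \<Rightarrow> real" where "zr x = of_int (fst x) + of_int (snd x) * phi"

lemma zr_add: "zr (zadd x y) = zr x + zr y"
  by (cases x; cases y) (simp add: zr_def algebra_simps)
lemma zr_mul: "zr (zmul x y) = zr x * zr y"
proof (cases x; cases y)
  fix a b c d assume "x = (a,b)" "y = (c,d)"
  then show ?thesis
    by (simp add: zr_def algebra_simps) (simp add: mult.assoc[symmetric] phi_sq, simp add: algebra_simps)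
qed
lemma zr_inj: "zr x = zr y \<Longrightarrow> x = y"
proof (cases x; cases y)
  fix a b c d assume xy: "x = (a,b)" "y = (c,d)" and "zr x = zr y"
  then have "of_int (a - c) + of_int (b - d) * phi = 0" by (simp add: zr_def algebra_simps)
  from phi_indep[OF this] xy show ?thesis by simp
qed

definition ix :: "3 \<Rightarrow> nat" where "ix i = (if i = 1 then 1 else if i = 2 then 2 else 0)"
lemma three_cases: "(i::3) = 0 \<or> i = 1 \<or> i = 2"
  using exhaust_3[of i] by auto
lemma ix_simps[simp]: "ix 0 = 0" "ix 1 = 1" "ix 2 = 2" "ix 3 = 0"
  by (simp_all add: ix_def)
lemma ix_lt: "ix i < 3" by (simp add: ix_def)
lemma ix_inj: "ix i = ix j \<Longrightarrow> i = j"
  using three_cases[of i] three_cases[of j] by auto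
lemma three_eq0: "(3::3) = 0" by simp
lemma forall3: "(\<forall>i::3. P i) \<longleftrightarrow> P 0 \<and> P 1 \<and> P 2"
  using three_cases by metis
lemma sum3': "sum f (UNIV::3 set) = f 0 + f 1 + f 2"
  by (simp add: sum_3 three_eq0 add_ac)

definition mml :: "zm \<Rightarrow> zm \<Rightarrow> zm" where
 "mml A B = map (\<lambda>i. map (\<lambda>j. zadd (zadd (zmul (A!i!0) (B!0!j)) (zmul (A!i!1) (B!1!j))) (zmul (A!i!2) (B!2!j))) [0,1,2]) [0,1,2]"
definition mvl :: "zm \<Rightarrow> zv \<Rightarrow> zv" where
 "mvl A v = map (\<lambda>i. zadd (zadd (zmul (A!i!0) (v!0)) (zmul (A!i!1) (v!1))) (zmul (A!i!2) (v!2))) [0,1,2]"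
definition to_mat :: "zm \<Rightarrow> mat3" where "to_mat A = (\<chi> i j. zr (A ! ix i ! ix j))"
definition to_vec :: "zv \<Rightarrow> real^3" where "to_vec v = (\<chi> i. zr (v ! ix i))"

lemma nth_012: "i < 3 \<Longrightarrow> [0,1,2::nat] ! i = i"
  by (cases i; cases "i - 1"; auto simp: nth_Cons split: nat.splits)

lemma to_mat_mml: "to_mat (mml A B) = to_mat A ** to_mat B"
  unfolding to_mat_def matrix_matrix_mult_def
  by (simp add: vec_eq_iff forall3 sum3' mml_def zr_add zr_mul)

lemma to_vec_mvl: "to_vec (mvl A v) = to_mat A *v to_vec v"
  unfolding to_mat_def to_vec_def matrix_vector_mult_def
  by (simp add: vec_eq_iff forall3 sum3' mvl_def zr_add zr_mul)

definition zvneq :: "zv \<Rightarrow> zv \<Rightarrow> bool" where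
  "zvneq u v = (u!0 \<noteq> v!0 \<or> u!1 \<noteq> v!1 \<or> u!2 \<noteq> v!2)"

lemma to_vec_neq: "zvneq u v \<Longrightarrow> to_vec u \<noteq> to_vec v"
proof
  assume "zvneq u v" "to_vec u = to_vec v"
  then have "\<And>i. zr (u ! ix i) = zr (v ! ix i)" by (simp add: to_vec_def vec_eq_iff)
  then have "\<And>i. u ! ix i = v ! ix i" using zr_inj by blast
  from this[of 0] this[of 1] this[of 2] \<open>zvneq u v\<close> show False by (simp add: zvneq_def)
qed

definition gl :: "nat \<Rightarrow> zm" where
  "gl n = (if n = 0 then [[(-1,0),(0,1),(0,0)],[(0,0),(1,0),(0,0)],[(0,0),(0,0),(1,0)]]
     else if n = 1 then [[(1,0),(0,0),(0,0)],[(0,1),(-1,0),(1,0)],[(0,0),(0,0),(1,0)]]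
     else [[(1,0),(0,0),(0,0)],[(0,0),(1,0),(0,0)],[(0,0),(1,0),(-1,0)]])"

lemma cos5: "cos (pi/5) = phi/2" by (simp add: phi_def)

lemma sgen_gl: "sgen i = to_mat (gl (ix i))"
proof -
  have d: "{a,b} = {0,1::3} \<longleftrightarrow> (a = 0 \<and> b = 1) \<or> (a = 1 \<and> b = 0)" for a b
    by (auto simp: doubleton_eq_iff)
  have d2: "{a,b} = {1,2::3} \<longleftrightarrow> (a = 1 \<and> b = 2) \<or> (a = 2 \<and> b = 1)" for a b
    by (auto simp: doubleton_eq_iff)
  show ?thesis
    unfolding vec_eq_iff sgen_def to_mat_def
    using three_cases[of i]
    by (auto simp: forall3 H3gram_def d d2 cos5 cos_60 gl_def zr_def)
qed

definition Rl :: "zm list" where "Rl = [[[((-1),0),(0,1),(0,0)],[(0,0),(1,0),(0,0)],[(0,0),(0,0),(1,0)]],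
  [[(1,0),(0,0),(0,0)],[(0,1),((-1),0),(1,0)],[(0,0),(0,0),(1,0)]],
  [[(1,0),(0,0),(0,0)],[(0,0),(1,0),(0,0)],[(0,0),(1,0),((-1),0)]],
  [[(0,1),(0,(-1)),(0,1)],[(1,0),(0,(-1)),(1,1)],[(0,0),(0,0),(1,0)]],
  [[(0,(-1)),(1,0),(0,1)],[(0,(-1)),(0,1),(1,0)],[(0,0),(0,0),(1,0)]],
  [[(1,0),(0,0),(0,0)],[(0,1),(0,0),((-1),0)],[(0,1),((-1),0),(0,0)]],
  [[(0,0),((-1),0),(1,1)],[((-1),0),(0,0),(1,1)],[(0,0),(0,0),(1,0)]],
  [[(0,1),(0,0),(0,(-1))],[(1,0),(1,0),((-1),(-1))],[(1,0),(0,0),(0,(-1))]],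
  [[(0,(-1)),(1,1),(0,(-1))],[(0,(-1)),(1,1),((-1),0)],[(0,(-1)),(0,1),(0,0)]],
  [[(0,0),(0,1),((-1),(-1))],[((-1),0),(1,1),((-1),(-1))],[((-1),0),(0,1),(0,(-1))]],
  [[(1,1),((-1),(-1)),(1,0)],[(1,1),(0,(-2)),(0,1)],[(1,0),(0,(-1)),(0,1)]],
  [[(1,1),(0,(-1)),((-1),0)],[(1,1),(0,(-1)),(0,(-1))],[(0,1),(0,(-1)),(0,0)]],
  [[(0,(-1)),(0,0),(0,1)],[((-1),(-1)),(1,0),(0,1)],[((-1),0),(0,0),(0,1)]],
  [[(0,(-1)),(0,1),(0,(-1))],[((-1),(-1)),(1,1),(0,(-1))],[(0,(-1)),(1,0),(0,0)]],
  [[(1,0),(0,(-1)),(0,0)],[(0,0),((-1),0),(0,0)],[(0,0),((-1),0),(1,0)]]]"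

definition tab :: "nat list list" where "tab = [[0,4,2,6,1,8,3,9,5,7,12,13,10,11,14],
  [3,1,5,0,6,2,4,7,10,11,8,9,12,14,13],
  [0,5,2,7,8,1,9,3,4,6,11,10,13,12,14],
  [4,6,10,3,0,5,1,11,12,14,2,7,8,13,9],
  [6,3,8,1,4,12,0,13,2,9,10,14,5,7,11],
  [7,2,1,3,11,5,10,0,9,8,6,4,14,13,12],
  [1,0,12,4,3,10,6,14,8,13,5,11,2,9,7],
  [8,1,11,10,13,9,14,7,0,5,3,2,12,4,6],
  [9,13,4,12,2,7,6,5,8,0,14,11,3,1,10],
  [5,11,13,14,4,0,12,8,7,9,10,1,6,2,3],
  [12,14,7,11,4,6,5,2,13,9,10,3,0,8,1],
  [13,9,3,2,12,14,6,10,8,1,7,11,4,0,5],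
  [10,1,9,8,14,11,13,7,3,2,0,5,12,6,4],
  [11,10,6,3,7,5,2,4,14,12,1,0,9,13,8],
  [0,8,2,9,5,4,7,6,1,3,13,12,11,10,14]]"

definition av :: "zv list" where "av = [[(0,1),(2,0),(0,0)],[(1,0),(0,0),(0,(-1))],[((-2),0),(0,0),(0,0)],[(0,1),(0,0),(1,(-1))],[(0,1),(0,0),(1,1)],[((-1),0),(0,0),(0,(-1))],[(1,1),(0,0),(1,0)],[(0,(-1)),(0,0),(1,(-1))],[(0,(-1)),(0,0),(1,1)],[((-1),(-1)),(0,0),(1,0)],[(1,0),(0,0),(0,(-1))],[((-1),0),(0,0),(0,(-1))],[(0,1),(0,0),(1,1)],[(0,(-1)),(0,0),(1,1)],[(0,(-1)),(0,0),(0,0)]]"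

definition bv :: "zv list" where "bv = [[(0,0),(0,0),(0,(-1))],[(0,0),(1,0),(2,0)],[(0,0),((-2),0),((-1),0)],[(0,0),(0,1),(0,1)],[(0,0),(0,1),((-1),0)],[(0,0),((-1),0),(1,0)],[(0,0),(1,1),(1,0)],[(0,0),(0,(-1)),(0,0)],[(0,0),(0,(-1)),((-1),(-1))],[(0,0),((-1),(-1)),(0,(-1))],[(0,0),(1,0),(1,1)],[(0,0),((-1),0),(0,1)],[(0,0),(0,1),(0,0)],[(0,0),(0,(-1)),(0,(-1))],[(0,0),(0,0),(0,1)]]"

definition ev :: "zv list list" where "ev = [[[(0,0),(0,0),(0,0)],[(0,0),(0,0),(0,0)],[(0,1),(2,0),(1,0)],[(0,0),(0,0),(0,0)],[(0,0),(0,0),(0,0)],[(0,0),(0,0),(0,0)],[(0,0),(0,0),(0,0)],[(0,0),(0,0),(0,0)],[(0,0),(0,0),(0,0)],[(0,0),(0,0),(0,0)],[(0,0),(0,0),(0,0)],[(0,0),(0,0),(0,0)],[(0,0),(0,0),(0,0)],[(0,0),(0,0),(0,0)],[(0,0),(0,0),((-1),0)]],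
 [[(0,0),(0,0),(0,0)],[(0,0),(0,0),(0,0)],[(0,0),(0,0),(0,0)],[(0,0),(0,0),(0,0)],[(0,0),(0,0),(0,0)],[(0,0),(0,0),(0,0)],[(0,0),(0,0),(0,0)],[(1,1),(1,1),(1,0)],[(0,0),(0,0),(0,0)],[(0,0),(0,0),(0,0)],[(0,0),(0,0),(0,0)],[(0,0),(0,0),(0,0)],[(1,(-1)),((-1),0),((-1),0)],[(0,0),(0,0),(0,0)],[(0,0),(0,0),(0,0)]],
 [[(0,1),(2,0),(1,0)],[(0,0),(0,0),(0,0)],[(0,0),(0,0),(0,0)],[(0,0),(0,0),(0,0)],[(0,0),(0,0),(0,0)],[(0,0),(0,0),(0,0)],[(0,0),(0,0),(0,0)],[(0,0),(0,0),(0,0)],[(0,0),(0,0),(0,0)],[(0,0),(0,0),(0,0)],[(0,0),(0,0),(0,0)],[(0,0),(0,0),(0,0)],[(0,0),(0,0),(0,0)],[(0,0),(0,0),(0,0)],[(2,0),(0,0),(0,0)]],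
 [[(0,0),(0,0),(0,0)],[(0,0),(0,0),(0,0)],[(0,0),(0,0),(0,0)],[(0,0),(0,0),(0,0)],[(0,0),(0,0),(0,0)],[(1,1),(1,1),(0,1)],[(0,0),(0,0),(0,0)],[(0,0),(0,0),(0,0)],[(0,0),(0,0),(0,0)],[(0,0),(0,0),(0,0)],[(0,0),(0,0),(0,0)],[(0,0),(0,0),(0,0)],[(0,0),(0,0),(0,0)],[(0,0),(0,(-1)),(0,(-1))],[(0,0),(0,0),(0,0)]],
 [[(0,0),(0,0),(0,0)],[(0,0),(0,0),(0,0)],[(0,0),(0,0),(0,0)],[(0,0),(0,0),(0,0)],[(0,0),(0,0),(0,0)],[(0,0),(0,0),(0,0)],[(0,0),(0,0),(0,0)],[(0,0),(0,0),(0,0)],[(0,0),(0,0),(0,0)],[(0,(-1)),((-1),(-1)),((-1),0)],[(1,0),(1,0),(1,0)],[(0,0),(0,0),(0,0)],[(0,0),(0,0),(0,0)],[(0,0),(0,0),(0,0)],[(0,0),(0,0),(0,0)]],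
 [[(0,0),(0,0),(0,0)],[(0,0),(0,0),(0,0)],[(0,0),(0,0),(0,0)],[(1,1),(1,1),(0,1)],[(0,0),(0,0),(0,0)],[(0,0),(0,0),(0,0)],[(0,0),(0,0),(0,0)],[(0,0),(0,0),(0,0)],[(0,0),(0,0),(0,0)],[(0,0),(0,0),(0,0)],[(0,0),(0,0),(0,0)],[(0,0),(0,0),(0,0)],[(0,0),(0,0),(0,0)],[(1,(-1)),((-1),0),(0,0)],[(0,0),(0,0),(0,0)]],
 [[(0,0),(0,0),(0,0)],[(0,0),(0,0),(0,0)],[(0,0),(0,0),(0,0)],[(0,0),(0,0),(0,0)],[(0,0),(0,0),(0,0)],[(0,0),(0,0),(0,0)],[(0,0),(0,0),(0,0)],[(0,0),(0,0),(0,0)],[(0,(-1)),((-1),(-1)),(0,(-1))],[(0,0),(0,0),(0,0)],[(0,0),(0,0),(0,0)],[(1,1),(0,1),(0,1)],[(0,0),(0,0),(0,0)],[(0,0),(0,0),(0,0)],[(0,0),(0,0),(0,0)]],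
 [[(0,0),(0,0),(0,0)],[(1,1),(1,1),(1,0)],[(0,0),(0,0),(0,0)],[(0,0),(0,0),(0,0)],[(0,0),(0,0),(0,0)],[(0,0),(0,0),(0,0)],[(0,0),(0,0),(0,0)],[(0,0),(0,0),(0,0)],[(0,0),(0,0),(0,0)],[(0,0),(0,0),(0,0)],[(0,0),(0,0),(0,0)],[(0,0),(0,0),(0,0)],[(0,0),(0,(-1)),(0,0)],[(0,0),(0,0),(0,0)],[(0,0),(0,0),(0,0)]],
 [[(0,0),(0,0),(0,0)],[(0,0),(0,0),(0,0)],[(0,0),(0,0),(0,0)],[(0,0),(0,0),(0,0)],[(0,0),(0,0),(0,0)],[(0,0),(0,0),(0,0)],[(0,(-1)),((-1),(-1)),(0,(-1))],[(0,0),(0,0),(0,0)],[(0,0),(0,0),(0,0)],[(0,0),(0,0),(0,0)],[(0,0),(0,0),(0,0)],[(1,0),(1,0),(0,0)],[(0,0),(0,0),(0,0)],[(0,0),(0,0),(0,0)],[(0,0),(0,0),(0,0)]],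
 [[(0,0),(0,0),(0,0)],[(0,0),(0,0),(0,0)],[(0,0),(0,0),(0,0)],[(0,0),(0,0),(0,0)],[(0,(-1)),((-1),(-1)),((-1),0)],[(0,0),(0,0),(0,0)],[(0,0),(0,0),(0,0)],[(0,0),(0,0),(0,0)],[(0,0),(0,0),(0,0)],[(0,0),(0,0),(0,0)],[(1,1),(0,1),(0,0)],[(0,0),(0,0),(0,0)],[(0,0),(0,0),(0,0)],[(0,0),(0,0),(0,0)],[(0,0),(0,0),(0,0)]],
 [[(0,0),(0,0),(0,0)],[(0,0),(0,0),(0,0)],[(0,0),(0,0),(0,0)],[(0,0),(0,0),(0,0)],[(1,0),(1,0),(1,0)],[(0,0),(0,0),(0,0)],[(0,0),(0,0),(0,0)],[(0,0),(0,0),(0,0)],[(0,0),(0,0),(0,0)],[(1,1),(0,1),(0,0)],[(0,0),(0,0),(0,0)],[(0,0),(0,0),(0,0)],[(0,0),(0,0),(0,0)],[(0,0),(0,0),(0,0)],[(0,0),(0,0),(0,0)]],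
 [[(0,0),(0,0),(0,0)],[(0,0),(0,0),(0,0)],[(0,0),(0,0),(0,0)],[(0,0),(0,0),(0,0)],[(0,0),(0,0),(0,0)],[(0,0),(0,0),(0,0)],[(1,1),(0,1),(0,1)],[(0,0),(0,0),(0,0)],[(1,0),(1,0),(0,0)],[(0,0),(0,0),(0,0)],[(0,0),(0,0),(0,0)],[(0,0),(0,0),(0,0)],[(0,0),(0,0),(0,0)],[(0,0),(0,0),(0,0)],[(0,0),(0,0),(0,0)]],
 [[(0,0),(0,0),(0,0)],[(1,(-1)),((-1),0),((-1),0)],[(0,0),(0,0),(0,0)],[(0,0),(0,0),(0,0)],[(0,0),(0,0),(0,0)],[(0,0),(0,0),(0,0)],[(0,0),(0,0),(0,0)],[(0,0),(0,(-1)),(0,0)],[(0,0),(0,0),(0,0)],[(0,0),(0,0),(0,0)],[(0,0),(0,0),(0,0)],[(0,0),(0,0),(0,0)],[(0,0),(0,0),(0,0)],[(0,0),(0,0),(0,0)],[(0,0),(0,0),(0,0)]],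
 [[(0,0),(0,0),(0,0)],[(0,0),(0,0),(0,0)],[(0,0),(0,0),(0,0)],[(0,0),(0,(-1)),(0,(-1))],[(0,0),(0,0),(0,0)],[(1,(-1)),((-1),0),(0,0)],[(0,0),(0,0),(0,0)],[(0,0),(0,0),(0,0)],[(0,0),(0,0),(0,0)],[(0,0),(0,0),(0,0)],[(0,0),(0,0),(0,0)],[(0,0),(0,0),(0,0)],[(0,0),(0,0),(0,0)],[(0,0),(0,0),(0,0)],[(0,0),(0,0),(0,0)]],
 [[(0,0),(0,0),((-1),0)],[(0,0),(0,0),(0,0)],[(2,0),(0,0),(0,0)],[(0,0),(0,0),(0,0)],[(0,0),(0,0),(0,0)],[(0,0),(0,0),(0,0)],[(0,0),(0,0),(0,0)],[(0,0),(0,0),(0,0)],[(0,0),(0,0),(0,0)],[(0,0),(0,0),(0,0)],[(0,0),(0,0),(0,0)],[(0,0),(0,0),(0,0)],[(0,0),(0,0),(0,0)],[(0,0),(0,0),(0,0)],[(0,0),(0,0),(0,0)]]]"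

definition uq :: "nat list list" where "uq = [[0,6,0,1,3,9,4,5,7,8,12,13,10,11,0],
 [6,0,5,4,0,2,3,0,14,11,13,9,0,8,10],
 [0,5,0,11,8,1,13,10,4,12,3,7,6,9,0],
 [1,4,11,0,6,0,0,2,12,14,7,10,8,0,9],
 [3,0,8,6,0,14,1,13,2,0,0,5,11,7,12],
 [9,2,1,0,14,0,10,8,0,7,6,12,4,0,11],
 [4,3,13,0,1,10,0,14,0,2,5,0,9,12,7],
 [5,0,10,2,13,8,14,0,9,0,11,3,0,4,6],
 [7,14,4,12,2,0,0,9,0,5,1,0,3,10,13],
 [8,11,12,14,0,7,2,0,5,0,0,1,13,6,3],
 [12,13,3,7,0,6,5,11,1,0,0,2,0,14,8],
 [13,9,7,10,5,12,0,3,0,1,2,0,14,0,4],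
 [10,0,6,8,11,4,9,0,3,13,0,14,0,2,5],
 [11,8,9,0,7,0,12,4,10,6,14,0,2,0,1],
 [0,10,0,9,12,11,7,6,13,3,8,4,5,1,0]]"
definition Id3 :: zm where "Id3 = [[(1,0),(0,0),(0,0)],[(0,0),(1,0),(0,0)],[(0,0),(0,0),(1,0)]]"

lemma K1: "list_all (\<lambda>k. list_all (\<lambda>j. mml (mml (Rl!k) (Rl!j)) (Rl!k) = Rl!(tab!k!j) \<and> tab!k!j < 15) [0..<15]) [0..<15]"
  by code_simp
lemma K2: "list_all (\<lambda>k. mml (Rl!k) (Rl!k) = Id3) [0..<15]"
  by code_simp
lemma Kgen: "Rl!0 = gl 0 \<and> Rl!1 = gl 1 \<and> Rl!2 = gl 2"
  by code_simp
lemma K4: "list_all (\<lambda>i. mvl (Rl!i) (av!i) = av!i \<and> mvl (Rl!i) (bv!i) = bv!i \<and>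
   list_all (\<lambda>j. i \<noteq> j \<longrightarrow> zvneq (mvl (Rl!j) (av!i)) (av!i) \<or> zvneq (mvl (Rl!j) (bv!i)) (bv!i)) [0..<15]) [0..<15]"
  by code_simp
lemma K5: "list_all (\<lambda>i. list_all (\<lambda>j. i \<noteq> j \<and> tab!i!j = j \<longrightarrow>
   mvl (Rl!i) (ev!i!j) = ev!i!j \<and> mvl (Rl!j) (ev!i!j) = ev!i!j \<and>
   list_all (\<lambda>k. k \<noteq> i \<and> k \<noteq> j \<longrightarrow> zvneq (mvl (Rl!k) (ev!i!j)) (ev!i!j)) [0..<15]) [0..<15]) [0..<15]"
  by code_simp
lemma K8: "list_all (\<lambda>i. list_all (\<lambda>j. i \<noteq> j \<and> tab!i!j \<noteq> j \<longrightarrow>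
   uq!i!j < 15 \<and> tab!(uq!i!j)!j = i \<and> list_all (\<lambda>k. tab!k!j = i \<longrightarrow> k = uq!i!j) [0..<15]) [0..<15]) [0..<15]"
  by code_simp
lemma Kcomm: "list_all (\<lambda>i. list_all (\<lambda>j. list_all (\<lambda>k. tab!i!j = j \<longrightarrow> tab!k!i = i \<longrightarrow> tab!k!j = j) [0..<15]
    \<and> (tab!i!j = j \<longrightarrow> tab!j!i = i)) [0..<15]) [0..<15]"
  by code_simp
lemma Kreps: "list_all (\<lambda>i. tab!0!i = i \<or> tab!1!i = i \<or> tab!3!i = i \<or> tab!4!i = i \<or> tab!6!i = i) [0..<15]
  \<and> list_all (\<lambda>i. list_all (\<lambda>j. i \<noteq> j \<longrightarrow> tab!i!j \<noteq> j) [0,1,3,4,6]) [0,1,3,4,6]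
  \<and> tab!(uq!1!0)!0 = 1 \<and> tab!(uq!2!1)!1 = 2"
  by code_simp


lemma la: "list_all P [0..<n] \<longleftrightarrow> (\<forall>k<n. P k)"
  by (auto simp: list_all_iff)

definition Mi :: "nat \<Rightarrow> mat3" where "Mi k = to_mat (Rl ! k)"

lemma to_mat_Id3: "to_mat Id3 = mat 1"
  by (simp add: to_mat_def Id3_def vec_eq_iff forall3 mat_def zr_def)

lemma Mtab: "k < 15 \<Longrightarrow> j < 15 \<Longrightarrow> Mi k ** Mi j ** Mi k = Mi (tab!k!j)"
  using K1 unfolding la Mi_def by (simp add: to_mat_mml[symmetric])
lemma tab_lt: "k < 15 \<Longrightarrow> j < 15 \<Longrightarrow> tab!k!j < 15"
  using K1 unfolding la by simp
lemma Msq: "k < 15 \<Longrightarrow> Mi k ** Mi k = mat 1"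
  using K2 unfolding la Mi_def by (simp add: to_mat_mml[symmetric] to_mat_Id3)
lemma sgen_Mi: "sgen i = Mi (ix i)"
proof -
  have "ix i = 0 \<or> ix i = 1 \<or> ix i = 2" using three_cases[of i] by auto
  then show ?thesis using Kgen by (auto simp: sgen_gl Mi_def)
qed

lemma Mfix: "i < 15 \<Longrightarrow> Mi i *v to_vec (av!i) = to_vec (av!i) \<and> Mi i *v to_vec (bv!i) = to_vec (bv!i)"
  using K4 unfolding la Mi_def by (simp add: to_vec_mvl[symmetric])
lemma Mnfix: "i < 15 \<Longrightarrow> j < 15 \<Longrightarrow> i \<noteq> j \<Longrightarrow>
   Mi j *v to_vec (av!i) \<noteq> to_vec (av!i) \<or> Mi j *v to_vec (bv!i) \<noteq> to_vec (bv!i)"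
  using K4 unfolding la Mi_def by (auto simp: to_vec_mvl[symmetric] dest!: to_vec_neq)

lemma Fix_inj: "i < 15 \<Longrightarrow> j < 15 \<Longrightarrow> Fix (Mi i) = Fix (Mi j) \<Longrightarrow> i = j"
proof (rule ccontr)
  assume h: "i < 15" "j < 15" "Fix (Mi i) = Fix (Mi j)" "i \<noteq> j"
  have "to_vec (av!i) \<in> Fix (Mi i)" "to_vec (bv!i) \<in> Fix (Mi i)" using Mfix[OF h(1)] by (auto simp: Fix_def)
  then show False using h Mnfix[OF h(1,2,4)] by (auto simp: Fix_def)
qed

lemma Mi_inj: "i < 15 \<Longrightarrow> j < 15 \<Longrightarrow> Mi i = Mi j \<Longrightarrow> i = j"
  using Fix_inj by metis

lemma Kedge: "i < 15 \<Longrightarrow> j < 15 \<Longrightarrow> i \<noteq> j \<Longrightarrow> tab!i!j = j \<Longrightarrow>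
  \<exists>e. Mi i *v e = e \<and> Mi j *v e = e \<and> (\<forall>k<15. k \<noteq> i \<and> k \<noteq> j \<longrightarrow> Mi k *v e \<noteq> e)"
  apply (rule exI[of _ "to_vec (ev!i!j)"])
  using K5 unfolding la Mi_def by (auto simp: to_vec_mvl[symmetric] dest!: to_vec_neq)

lemma Kuq: "i < 15 \<Longrightarrow> j < 15 \<Longrightarrow> i \<noteq> j \<Longrightarrow> tab!i!j \<noteq> j \<Longrightarrow>
   uq!i!j < 15 \<and> tab!(uq!i!j)!j = i \<and> (\<forall>k<15. tab!k!j = i \<longrightarrow> k = uq!i!j)"
  using K8 unfolding la by simp

lemma Kc_all: "\<forall>i<15. \<forall>j<15. (\<forall>k<15. tab!i!j = j \<longrightarrow> tab!k!i = i \<longrightarrow> tab!k!j = j) \<and> (tab!i!j = j \<longrightarrow> tab!j!i = i)"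
  using Kcomm unfolding la .
lemma Kc: "i < 15 \<Longrightarrow> j < 15 \<Longrightarrow> k < 15 \<Longrightarrow> tab!i!j = j \<Longrightarrow> tab!k!i = i \<Longrightarrow> tab!k!j = j"
  "i < 15 \<Longrightarrow> j < 15 \<Longrightarrow> tab!i!j = j \<Longrightarrow> tab!j!i = i"
  using Kc_all by blast+

lemma WH3_mult: "h \<in> WH3 \<Longrightarrow> g \<in> WH3 \<Longrightarrow> g ** h \<in> WH3"
proof (induction h rule: WH3.induct)
  case one then show ?case by simp
next
  case (step h i)
  then have "g ** h ** sgen i \<in> WH3" by (intro WH3.step) simp
  then show ?case by (simp add: matrix_mul_assoc)
qed

lemma sgen_WH3: "sgen i \<in> WH3"
  using WH3.step[OF WH3.one, of i] by simp

lemma sgen_sq: "sgen i ** sgen i = mat 1"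
  using Msq[of "ix i"] ix_lt[of i] by (simp add: sgen_Mi)

lemma inv_unique: "A ** B = mat 1 \<Longrightarrow> B ** A = mat 1 \<Longrightarrow> matrix_inv (A::mat3) = B"
proof -
  assume h: "A ** B = mat 1" "B ** A = mat 1"
  let ?C = "matrix_inv A"
  have c: "A ** ?C = mat 1 \<and> ?C ** A = mat 1"
    unfolding matrix_inv_def by (rule someI[of _ B]) (use h in simp)
  have "?C = ?C ** (A ** B)" by (simp add: h)
  also have "\<dots> = (?C ** A) ** B" by (simp add: matrix_mul_assoc)
  also have "\<dots> = B" using c by simp
  finally show ?thesis .
qed

lemma WH3_inv_ex: "w \<in> WH3 \<Longrightarrow> \<exists>w'\<in>WH3. w ** w' = mat 1 \<and> w' ** w = mat 1"
proof (induction w rule: WH3.induct)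
  case one then show ?case using WH3.one by auto
next
  case (step g i)
  then obtain g' where g': "g' \<in> WH3" "g ** g' = mat 1" "g' ** g = mat 1" by auto
  have "sgen i ** g' \<in> WH3" by (rule WH3_mult[OF g'(1) sgen_WH3])
  moreover have "(g ** sgen i) ** (sgen i ** g') = mat 1"
    by (simp add: matrix_mul_assoc) (simp add: matrix_mul_assoc[symmetric] sgen_sq g')
  moreover have "(sgen i ** g') ** (g ** sgen i) = mat 1"
    by (simp add: matrix_mul_assoc) (simp add: matrix_mul_assoc[symmetric] sgen_sq g')
  ultimately show ?case by blast
qed

lemma WH3_inv: "w \<in> WH3 \<Longrightarrow> matrix_inv w \<in> WH3 \<and> w ** matrix_inv w = mat 1 \<and> matrix_inv w ** w = mat 1"
  using WH3_inv_ex[of w] inv_unique by metis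

lemma inv_inv: "w \<in> WH3 \<Longrightarrow> matrix_inv (matrix_inv w) = w"
  using WH3_inv[of w] inv_unique by metis

lemma inv_mult: "a \<in> WH3 \<Longrightarrow> b \<in> WH3 \<Longrightarrow> matrix_inv (a ** b) = matrix_inv b ** matrix_inv a"
proof (rule inv_unique)
  assume a: "a \<in> WH3" and b: "b \<in> WH3"
  note ia = WH3_inv[OF a] and ib = WH3_inv[OF b]
  have "a ** b ** (matrix_inv b ** matrix_inv a) = a ** (b ** matrix_inv b) ** matrix_inv a"
    by (simp add: matrix_mul_assoc)
  then show "a ** b ** (matrix_inv b ** matrix_inv a) = mat 1" using ia ib by simp
  have "matrix_inv b ** matrix_inv a ** (a ** b) = matrix_inv b ** (matrix_inv a ** a) ** b"
    by (simp add: matrix_mul_assoc)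
  then show "matrix_inv b ** matrix_inv a ** (a ** b) = mat 1" using ia ib by simp
qed

definition wconj :: "mat3 \<Rightarrow> mat3 \<Rightarrow> mat3" where "wconj w r = w ** r ** matrix_inv w"

lemma Mi_WH3: "k < 15 \<Longrightarrow> Mi k \<in> Refl \<Longrightarrow> Mi k \<in> WH3"
proof -
  assume "Mi k \<in> Refl"
  then obtain w i where "w \<in> WH3" "Mi k = w ** sgen i ** matrix_inv w" by (auto simp: Refl_def)
  then show ?thesis using WH3_inv[of w] by (simp add: WH3_mult sgen_WH3)
qed

lemma Refl_WH3: "r \<in> Refl \<Longrightarrow> r \<in> WH3"
proof -
  assume "r \<in> Refl"
  then obtain w i where "w \<in> WH3" "r = w ** sgen i ** matrix_inv w" by (auto simp: Refl_def)
  then show ?thesis using WH3_inv[of w] by (simp add: WH3_mult sgen_WH3)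
qed

lemma conj_Refl: "w \<in> WH3 \<Longrightarrow> r \<in> Refl \<Longrightarrow> wconj w r \<in> Refl"
proof -
  assume w: "w \<in> WH3" and "r \<in> Refl"
  then obtain u i where u: "u \<in> WH3" "r = u ** sgen i ** matrix_inv u" by (auto simp: Refl_def)
  have "wconj w r = (w ** u) ** sgen i ** matrix_inv (w ** u)"
    using u w by (simp add: wconj_def inv_mult matrix_mul_assoc)
  then show ?thesis using WH3_mult[OF u(1) w] by (auto simp: Refl_def)
qed

lemma Refl_sub: "Refl \<subseteq> Mi ` {..<15}"
proof -
  have "\<forall>k<15. \<exists>k'<15. w ** Mi k ** matrix_inv w = Mi k'" if "w \<in> WH3" for w
  using that proof (induction w rule: WH3.induct)
    case one then show ?case using inv_unique[of "mat 1" "mat 1::mat3"] by auto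
  next
    case (step g j)
    show ?case
    proof (intro allI impI)
      fix k :: nat assume k: "k < 15"
      have "matrix_inv (g ** sgen j) = sgen j ** matrix_inv g"
        using inv_mult[OF step(1) sgen_WH3] inv_unique[OF sgen_sq sgen_sq] by simp
      then have "g ** sgen j ** Mi k ** matrix_inv (g ** sgen j) = g ** (sgen j ** Mi k ** sgen j) ** matrix_inv g"
        by (simp add: matrix_mul_assoc)
      also have "\<dots> = g ** Mi (tab ! ix j ! k) ** matrix_inv g"
        using Mtab[of "ix j" k] k ix_lt[of j] by (simp add: sgen_Mi)
      finally have e: "g ** sgen j ** Mi k ** matrix_inv (g ** sgen j) = g ** Mi (tab ! ix j ! k) ** matrix_inv g" .
      have t: "tab ! ix j ! k < 15" using tab_lt[of "ix j" k] k ix_lt[of j] by simp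
      obtain k' where "k' < 15" "g ** Mi (tab ! ix j ! k) ** matrix_inv g = Mi k'" using step(2) t by blast
      then show "\<exists>k'<15. g ** sgen j ** Mi k ** matrix_inv (g ** sgen j) = Mi k'"
        using e by auto
    qed
  qed
  then show ?thesis
  proof -
    assume h: "\<And>w. w \<in> WH3 \<Longrightarrow> \<forall>k<15. \<exists>k'<15. w ** Mi k ** matrix_inv w = Mi k'"
    show ?thesis
    proof
      fix x assume "x \<in> Refl"
      then obtain w i where w: "w \<in> WH3" "x = w ** sgen i ** matrix_inv w" by (auto simp: Refl_def)
      have "ix i < 15" using ix_lt[of i] by simp
      then obtain k' where "k' < 15" "x = Mi k'" using h[OF w(1)] w(2) by (auto simp: sgen_Mi)
      then show "x \<in> Mi ` {..<15}" by auto
    qed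
  qed
qed

lemma conjgen: "r \<in> Refl \<Longrightarrow> j < 3 \<Longrightarrow> Mi j ** r ** Mi j \<in> Refl"
proof -
  assume "r \<in> Refl" "j < 3"
  then have "j = ix 0 \<or> j = ix 1 \<or> j = ix 2" by auto
  then obtain i where j: "Mi j = sgen i" using sgen_Mi by metis
  have "matrix_inv (sgen i) = sgen i" using inv_unique[OF sgen_sq sgen_sq] .
  then show ?thesis using conj_Refl[OF sgen_WH3 \<open>r \<in> Refl\<close>, of i] j by (simp add: wconj_def)
qed

lemma Refl_eq: "Refl = Mi ` {..<15}"
proof
  show "Refl \<subseteq> Mi ` {..<15}" by (rule Refl_sub)
  have g: "Mi (ix i) \<in> Refl" for i
    unfolding Refl_def using WH3.one inv_unique[of "mat 1" "mat 1::mat3"] by (force simp: sgen_Mi)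
  have m0: "Mi 0 \<in> Refl" and m1: "Mi 1 \<in> Refl" and m2: "Mi 2 \<in> Refl" using g[of 0] g[of 1] g[of 2] by simp_all
  have m3: "Mi 3 \<in> Refl" using conjgen[OF m0, of 1] Mtab[of 1 0] by (simp add: tab_def)
  have m4: "Mi 4 \<in> Refl" using conjgen[OF m1, of 0] Mtab[of 0 1] by (simp add: tab_def)
  have m5: "Mi 5 \<in> Refl" using conjgen[OF m1, of 2] Mtab[of 2 1] by (simp add: tab_def)
  have m6: "Mi 6 \<in> Refl" using conjgen[OF m3, of 0] Mtab[of 0 3] by (simp add: tab_def)
  have m7: "Mi 7 \<in> Refl" using conjgen[OF m3, of 2] Mtab[of 2 3] by (simp add: tab_def)
  have m8: "Mi 8 \<in> Refl" using conjgen[OF m4, of 2] Mtab[of 2 4] by (simp add: tab_def)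
  have m9: "Mi 9 \<in> Refl" using conjgen[OF m6, of 2] Mtab[of 2 6] by (simp add: tab_def)
  have m10: "Mi 10 \<in> Refl" using conjgen[OF m8, of 1] Mtab[of 1 8] by (simp add: tab_def)
  have m11: "Mi 11 \<in> Refl" using conjgen[OF m9, of 1] Mtab[of 1 9] by (simp add: tab_def)
  have m12: "Mi 12 \<in> Refl" using conjgen[OF m10, of 0] Mtab[of 0 10] by (simp add: tab_def)
  have m13: "Mi 13 \<in> Refl" using conjgen[OF m11, of 0] Mtab[of 0 11] by (simp add: tab_def)
  have m14: "Mi 14 \<in> Refl" using conjgen[OF m13, of 1] Mtab[of 1 13] by (simp add: tab_def)
  show "Mi ` {..<15} \<subseteq> Refl"
  proof
    fix x assume "x \<in> Mi ` {..<15::nat}"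
    then obtain k where k: "k < 15" "x = Mi k" by auto
    have "list_all (\<lambda>k. Mi k \<in> Refl) [0..<15]"
      using m0 m1 m2 m3 m4 m5 m6 m7 m8 m9 m10 m11 m12 m13 m14 by (simp add: upt_rec numeral_eq_Suc)
    then show "x \<in> Refl" using k unfolding la by simp
  qed
qed


lemma Refl_cases: "r \<in> Refl \<Longrightarrow> \<exists>k<15. r = Mi k"
  using Refl_eq by auto
lemma Mi_Refl: "k < 15 \<Longrightarrow> Mi k \<in> Refl"
  using Refl_eq by auto
lemma Refl_sq: "r \<in> Refl \<Longrightarrow> r ** r = mat 1"
  using Refl_cases Msq by blast
lemma Refl_inv: "r \<in> Refl \<Longrightarrow> matrix_inv r = r"
  using Refl_sq inv_unique by blast
lemma finite_Refl: "finite Refl"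
proof -
  have "finite (Mi ` {..<15::nat})" by simp
  then show ?thesis using Refl_eq by metis
qed

lemma comm_tab: "k < 15 \<Longrightarrow> i < 15 \<Longrightarrow> (Mi k ** Mi i = Mi i ** Mi k) \<longleftrightarrow> tab!k!i = i"
proof
  assume k: "k < 15" and i: "i < 15" and c: "Mi k ** Mi i = Mi i ** Mi k"
  have "Mi k ** Mi i ** Mi k = Mi i ** (Mi k ** Mi k)" by (simp add: c matrix_mul_assoc)
  then have "Mi (tab!k!i) = Mi i" using Mtab[OF k i] Msq[OF k] by simp
  then show "tab!k!i = i" using Mi_inj tab_lt[OF k i] i by blast
next
  assume k: "k < 15" and i: "i < 15" and t: "tab!k!i = i"
  have "Mi k ** Mi i ** Mi k = Mi i" using Mtab[OF k i] t by simp
  have "Mi k ** Mi i = Mi k ** Mi i ** (Mi k ** Mi k)" by (simp add: Msq[OF k])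
  also have "\<dots> = (Mi k ** Mi i ** Mi k) ** Mi k" by (simp add: matrix_mul_assoc)
  finally show "Mi k ** Mi i = Mi i ** Mi k" using \<open>Mi k ** Mi i ** Mi k = Mi i\<close> by simp
qed

lemma comm_trans: "r \<in> Refl \<Longrightarrow> s \<in> Refl \<Longrightarrow> t \<in> Refl \<Longrightarrow> r ** s = s ** r \<Longrightarrow> s ** t = t ** s \<Longrightarrow> r ** t = t ** r"
proof -
  assume "r \<in> Refl" "s \<in> Refl" "t \<in> Refl" and rs: "r ** s = s ** r" and st: "s ** t = t ** s"
  then obtain a b c where abc: "a < 15" "b < 15" "c < 15" "r = Mi a" "s = Mi b" "t = Mi c"
    using Refl_cases by metis
  have "tab!a!b = b" using rs comm_tab abc by simp
  moreover have "tab!b!c = c" using st comm_tab abc by simp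
  ultimately have "tab!a!c = c" using Kc(1)[of b c a] abc by simp
  then show ?thesis using comm_tab abc by simp
qed

lemma cls_self: "s \<in> Refl \<Longrightarrow> s \<in> cls_of s"
  by (simp add: cls_of_def)

lemma cls_eq: "s \<in> Refl \<Longrightarrow> t \<in> Refl \<Longrightarrow> cls_of s = cls_of t \<longleftrightarrow> s ** t = t ** s"
proof
  assume "s \<in> Refl" "t \<in> Refl" "cls_of s = cls_of t"
  then have "s \<in> cls_of t" using cls_self by blast
  then show "s ** t = t ** s" by (simp add: cls_of_def)
next
  assume s: "s \<in> Refl" and t: "t \<in> Refl" and st: "s ** t = t ** s"
  show "cls_of s = cls_of t"
    unfolding cls_of_def using comm_trans[OF _ s t _ st] comm_trans[OF _ t s _ st[symmetric]] by auto
qed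

lemma mem_cls: "s \<in> Refl \<Longrightarrow> p \<in> Classes \<Longrightarrow> s \<in> p \<longleftrightarrow> p = cls_of s"
proof -
  assume s: "s \<in> Refl" and "p \<in> Classes"
  then obtain t where t: "t \<in> Refl" "p = cls_of t" by (auto simp: Classes_def)
  have "s \<in> cls_of t \<longleftrightarrow> s ** t = t ** s" using s by (simp add: cls_of_def)
  also have "\<dots> \<longleftrightarrow> cls_of t = cls_of s" using cls_eq[OF s t(1)] by auto
  finally show ?thesis using t by simp
qed

lemma cls_in: "s \<in> Refl \<Longrightarrow> cls_of s \<in> Classes"
  by (simp add: Classes_def)

lemma finite_Classes: "finite Classes"
  unfolding Classes_def using finite_Refl by simp

lemma card_Classes: "card Classes = 5"
proof -
  have reps: "\<forall>i<15. tab!0!i = i \<or> tab!1!i = i \<or> tab!3!i = i \<or> tab!4!i = i \<or> tab!6!i = i"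
    and nc: "\<forall>i\<in>set [0,1,3,4,6]. \<forall>j\<in>set [0,1,3,4,6]. i \<noteq> j \<longrightarrow> tab!i!j \<noteq> j"
    using Kreps unfolding la by (auto simp: list_all_iff)
  have C: "Classes = cls_of ` Mi ` {0,1,3,4,6}"
  proof
    show "cls_of ` Mi ` {0,1,3,4,6} \<subseteq> Classes" using Mi_Refl cls_in by auto
    show "Classes \<subseteq> cls_of ` Mi ` {0,1,3,4,6}"
    proof
      fix p assume "p \<in> Classes"
      then obtain i where i: "i < 15" "p = cls_of (Mi i)" using Refl_cases by (auto simp: Classes_def)
      then obtain r where r: "r \<in> {0,1,3,4,6::nat}" "tab!r!i = i" using reps by auto
      then have "r < 15" by auto
      then have "cls_of (Mi r) = cls_of (Mi i)"
        using cls_eq[OF Mi_Refl Mi_Refl] comm_tab r i by simp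
      then show "p \<in> cls_of ` Mi ` {0,1,3,4,6}" using r i by auto
    qed
  qed
  have inj: "inj_on (\<lambda>k. cls_of (Mi k)) {0,1,3,4,6}"
  proof (rule inj_onI)
    fix a b assume ab: "a \<in> {0,1,3,4,6::nat}" "b \<in> {0,1,3,4,6::nat}" "cls_of (Mi a) = cls_of (Mi b)"
    then have "a < 15" "b < 15" by auto
    then have "tab!a!b = b" using ab cls_eq[OF Mi_Refl Mi_Refl] comm_tab by simp
    then show "a = b" using nc ab by auto
  qed
  have "Classes = (\<lambda>k. cls_of (Mi k)) ` {0,1,3,4,6}" using C by (simp add: image_image)
  then have "card Classes = card {0,1,3,4,6::nat}" using card_image[OF inj] by simp
  then show ?thesis by simp
qed

section \<open>conjugation\<close>

lemma conj_mult: "w \<in> WH3 \<Longrightarrow> wconj w a ** wconj w b = wconj w (a ** b)"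
proof -
  assume w: "w \<in> WH3"
  have "wconj w a ** wconj w b = w ** a ** (matrix_inv w ** w) ** b ** matrix_inv w"
    by (simp add: wconj_def matrix_mul_assoc)
  then show ?thesis using WH3_inv[OF w] by (simp add: wconj_def matrix_mul_assoc)
qed

lemma conj_inv1: "w \<in> WH3 \<Longrightarrow> wconj (matrix_inv w) (wconj w x) = x"
proof -
  assume w: "w \<in> WH3"
  have "wconj (matrix_inv w) (wconj w x) = (matrix_inv w ** w) ** x ** (matrix_inv w ** w)"
    using inv_inv[OF w] by (simp add: wconj_def matrix_mul_assoc)
  then show ?thesis using WH3_inv[OF w] by simp
qed

lemma conj_inv2: "w \<in> WH3 \<Longrightarrow> wconj w (wconj (matrix_inv w) x) = x"
  using conj_inv1[of "matrix_inv w" x] WH3_inv inv_inv by metis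

lemma conj_comp: "a \<in> WH3 \<Longrightarrow> b \<in> WH3 \<Longrightarrow> wconj (a ** b) x = wconj a (wconj b x)"
  by (simp add: wconj_def inv_mult matrix_mul_assoc)

definition pc :: "mat3 \<Rightarrow> mat3 set \<Rightarrow> mat3 set" where
  "pc w p = (\<lambda>r. w ** r ** matrix_inv w) ` p"

lemma pc_conj: "pc w p = wconj w ` p" by (simp add: pc_def wconj_def)

lemma pc_cls: "w \<in> WH3 \<Longrightarrow> s \<in> Refl \<Longrightarrow> pc w (cls_of s) = cls_of (wconj w s)"
proof
  assume w: "w \<in> WH3" and s: "s \<in> Refl"
  show "pc w (cls_of s) \<subseteq> cls_of (wconj w s)"
  proof
    fix x assume "x \<in> pc w (cls_of s)"
    then obtain r where r: "r \<in> Refl" "r ** s = s ** r" "x = wconj w r" by (auto simp: pc_conj cls_of_def)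
    have "wconj w r ** wconj w s = wconj w s ** wconj w r" using conj_mult[OF w] r(2) by simp
    then show "x \<in> cls_of (wconj w s)" using conj_Refl[OF w r(1)] r(3) by (simp add: cls_of_def)
  qed
  show "cls_of (wconj w s) \<subseteq> pc w (cls_of s)"
  proof
    fix x assume "x \<in> cls_of (wconj w s)"
    then have x: "x \<in> Refl" "x ** wconj w s = wconj w s ** x" by (auto simp: cls_of_def)
    have iw: "matrix_inv w \<in> WH3" using WH3_inv[OF w] by simp
    let ?y = "wconj (matrix_inv w) x"
    have "?y ** s = wconj (matrix_inv w) (x ** wconj w s)"
      using conj_mult[OF iw, of x "wconj w s"] conj_inv1[OF w] by simp
    also have "\<dots> = wconj (matrix_inv w) (wconj w s ** x)" using x(2) by simp
    also have "\<dots> = s ** ?y" using conj_mult[OF iw, of "wconj w s" x] conj_inv1[OF w] by simp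
    finally have "?y \<in> cls_of s" using conj_Refl[OF iw x(1)] by (simp add: cls_of_def)
    moreover have "x = wconj w ?y" using conj_inv2[OF w] by simp
    ultimately show "x \<in> pc w (cls_of s)" by (auto simp: pc_conj)
  qed
qed

lemma pc_Classes: "w \<in> WH3 \<Longrightarrow> p \<in> Classes \<Longrightarrow> pc w p \<in> Classes"
  by (auto simp: Classes_def pc_cls conj_Refl)

lemma pc_inv1: "w \<in> WH3 \<Longrightarrow> p \<in> Classes \<Longrightarrow> pc (matrix_inv w) (pc w p) = p"
proof -
  assume w: "w \<in> WH3" and "p \<in> Classes"
  then obtain s where s: "s \<in> Refl" "p = cls_of s" by (auto simp: Classes_def)
  have iw: "matrix_inv w \<in> WH3" using WH3_inv[OF w] by simp
  show ?thesis using s pc_cls[OF w s(1)] pc_cls[OF iw conj_Refl[OF w s(1)]] conj_inv1[OF w] by simp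
qed

lemma pc_inv2: "w \<in> WH3 \<Longrightarrow> p \<in> Classes \<Longrightarrow> pc w (pc (matrix_inv w) p) = p"
  using pc_inv1[of "matrix_inv w" p] WH3_inv inv_inv by metis

lemma pc_comp: "a \<in> WH3 \<Longrightarrow> b \<in> WH3 \<Longrightarrow> pc (a ** b) p = pc a (pc b p)"
  by (simp add: pc_conj conj_comp image_image)

lemma pc_one: "pc (mat 1) p = p"
  using inv_unique[of "mat 1" "mat 1::mat3"] by (simp add: pc_def)



definition Sm :: "vecU \<Rightarrow> complex" where "Sm v = (\<Sum>p\<in>Classes. v p)"

lemma T4_formula: "w \<in> WH3 \<Longrightarrow> T4 w v = (\<lambda>q. if q \<in> Classes then v (pc (matrix_inv w) q) else 0)"
proof
  fix q assume w: "w \<in> WH3"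
  show "T4 w v q = (if q \<in> Classes then v (pc (matrix_inv w) q) else 0)"
  proof (cases "q \<in> Classes")
    case True
    have "(\<Sum>p\<in>Classes. v p * ubasis (pc w p) q) = (\<Sum>p\<in>Classes. if p = pc (matrix_inv w) q then v p else 0)"
    proof (rule sum.cong)
      fix p assume p: "p \<in> Classes"
      have "q = pc w p \<longleftrightarrow> p = pc (matrix_inv w) q"
        using pc_inv1[OF w p] pc_inv2[OF w True] by metis
      then show "v p * ubasis (pc w p) q = (if p = pc (matrix_inv w) q then v p else 0)"
        by (auto simp: ubasis_def)
    qed simp
    also have "\<dots> = v (pc (matrix_inv w) q)"
      using pc_Classes[OF conjunct1[OF WH3_inv[OF w]] True] finite_Classes by simp
    finally show ?thesis using True unfolding T4_def lin_op_def pc_def[symmetric] by simp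
  next
    case False then show ?thesis by (simp add: T4_def lin_op_def)
  qed
qed

lemma E4_formula: "s \<in> Refl \<Longrightarrow> E4 \<tau> s v = (\<lambda>q. if q = cls_of s then (\<tau> - 1) * v (cls_of s) + Sm v else 0)"
proof
  fix q assume s: "s \<in> Refl"
  let ?c = "cls_of s"
  have cin: "?c \<in> Classes" using cls_in[OF s] .
  have tm: "v p * (if s \<in> p then (\<lambda>q. \<tau> * ubasis p q) else ubasis ?c) q
      = (if q = ?c then v p + (if p = ?c then (\<tau> - 1) * v p else 0) else 0)" if p: "p \<in> Classes" for p
    using mem_cls[OF s p] by (auto simp: ubasis_def algebra_simps)
  show "E4 \<tau> s v q = (if q = ?c then (\<tau> - 1) * v ?c + Sm v else 0)"
  proof (cases "q \<in> Classes")
    case True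
    have "E4 \<tau> s v q = (\<Sum>p\<in>Classes. if q = ?c then v p + (if p = ?c then (\<tau> - 1) * v p else 0) else 0)"
      using True by (simp add: E4_def lin_op_def tm cong: sum.cong)
    also have "\<dots> = (if q = ?c then (\<tau> - 1) * v ?c + Sm v else 0)"
      using cin finite_Classes by (simp add: sum.distrib Sm_def)
    finally show ?thesis .
  next
    case False
    then have "q \<noteq> ?c" using cin by auto
    then show ?thesis using False by (simp add: E4_def lin_op_def)
  qed
qed

lemma Sm_T4: "w \<in> WH3 \<Longrightarrow> Sm (T4 w v) = Sm v"
proof -
  assume w: "w \<in> WH3"
  have iw: "matrix_inv w \<in> WH3" using WH3_inv[OF w] by simp
  have "Sm (T4 w v) = (\<Sum>q\<in>Classes. v (pc (matrix_inv w) q))"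
    by (simp add: Sm_def T4_formula[OF w])
  also have "\<dots> = (\<Sum>p\<in>Classes. v p)"
    by (rule sum.reindex_bij_witness[of _ "pc w" "pc (matrix_inv w)"])
       (auto simp: pc_inv1[OF w] pc_inv2[OF w] pc_Classes[OF w] pc_Classes[OF iw])
  finally show ?thesis by (simp add: Sm_def)
qed

lemma T4_at_cls: "w \<in> WH3 \<Longrightarrow> s \<in> Refl \<Longrightarrow> T4 w v (cls_of (wconj w s)) = v (cls_of s)"
proof -
  assume w: "w \<in> WH3" and s: "s \<in> Refl"
  have iw: "matrix_inv w \<in> WH3" using WH3_inv[OF w] by simp
  have "pc (matrix_inv w) (cls_of (wconj w s)) = cls_of s"
    using pc_cls[OF iw conj_Refl[OF w s]] conj_inv1[OF w] by simp
  then show ?thesis using cls_in[OF conj_Refl[OF w s]] by (simp add: T4_formula[OF w])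
qed

lemma rel8: "w \<in> WH3 \<Longrightarrow> s \<in> Refl \<Longrightarrow> T4 w (E4 \<tau> s v) = E4 \<tau> (wconj w s) (T4 w v)"
proof
  fix q assume w: "w \<in> WH3" and s: "s \<in> Refl"
  have iw: "matrix_inv w \<in> WH3" using WH3_inv[OF w] by simp
  have s': "wconj w s \<in> Refl" using conj_Refl[OF w s] .
  have pcs: "pc w (cls_of s) = cls_of (wconj w s)" using pc_cls[OF w s] .
  have eq: "q \<in> Classes \<Longrightarrow> (pc (matrix_inv w) q = cls_of s) \<longleftrightarrow> q = cls_of (wconj w s)"
    using pc_inv1[OF w cls_in[OF s]] pc_inv2[OF w] pcs by metis
  show "T4 w (E4 \<tau> s v) q = E4 \<tau> (wconj w s) (T4 w v) q"
    unfolding T4_formula[OF w, where v="E4 \<tau> s v"] E4_formula[OF s'] T4_at_cls[OF w s] Sm_T4[OF w]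
    using eq cls_in[OF s'] by (auto simp: E4_formula[OF s])
qed

lemma E4_T4_fix: "w \<in> WH3 \<Longrightarrow> s \<in> Refl \<Longrightarrow> wconj w s = s \<Longrightarrow> E4 \<tau> s (T4 w v) = E4 \<tau> s v"
proof -
  assume w: "w \<in> WH3" and s: "s \<in> Refl" and c: "wconj w s = s"
  have tv: "T4 w v (cls_of s) = v (cls_of s)" using T4_at_cls[OF w s, of v] c by simp
  show ?thesis using tv unfolding E4_formula[OF s, where v="T4 w v"] E4_formula[OF s, where v=v] Sm_T4[OF w] by (simp only: tv)
qed

lemma T4_E4_fix: "w \<in> WH3 \<Longrightarrow> s \<in> Refl \<Longrightarrow> wconj w s = s \<Longrightarrow> T4 w (E4 \<tau> s v) = E4 \<tau> s v"
  using rel8 E4_T4_fix by metis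

lemma E4_E4: "s \<in> Refl \<Longrightarrow> E4 \<tau> s (E4 \<tau> s v) = (\<lambda>q. \<tau> * E4 \<tau> s v q)"
proof -
  assume s: "s \<in> Refl"
  have S: "Sm (E4 \<tau> s v) = (\<tau> - 1) * v (cls_of s) + Sm v"
    using cls_in[OF s] finite_Classes by (simp add: Sm_def E4_formula[OF s] if_distrib cong: if_cong)
  have V: "E4 \<tau> s v (cls_of s) = (\<tau> - 1) * v (cls_of s) + Sm v"
    by (simp add: E4_formula[OF s])
  show ?thesis
    unfolding E4_formula[OF s, where v="E4 \<tau> s v"] S V
    by (rule ext) (simp add: E4_formula[OF s] algebra_simps)
qed



lemma Fix_conj: "w \<in> WH3 \<Longrightarrow> Fix (wconj w s) = (\<lambda>v. w *v v) ` Fix s"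
proof
  assume w: "w \<in> WH3"
  note iw = WH3_inv[OF w]
  show "Fix (wconj w s) \<subseteq> (\<lambda>v. w *v v) ` Fix s"
  proof
    fix v assume "v \<in> Fix (wconj w s)"
    then have h: "(w ** s ** matrix_inv w) *v v = v" by (simp add: Fix_def wconj_def)
    let ?u = "matrix_inv w *v v"
    have "s *v ?u = matrix_inv w *v ((w ** s ** matrix_inv w) *v v)"
      by (simp add: matrix_vector_mul_assoc matrix_mul_assoc iw)
    then have "s *v ?u = ?u" using h by simp
    moreover have "v = w *v ?u" by (simp add: matrix_vector_mul_assoc iw)
    ultimately show "v \<in> (\<lambda>v. w *v v) ` Fix s" by (auto simp: Fix_def)
  qed
  show "(\<lambda>v. w *v v) ` Fix s \<subseteq> Fix (wconj w s)"
  proof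
    fix x assume "x \<in> (\<lambda>v. w *v v) ` Fix s"
    then obtain u where u: "s *v u = u" "x = w *v u" by (auto simp: Fix_def)
    have "(w ** s ** matrix_inv w) *v (w *v u) = w *v (s *v ((matrix_inv w ** w) *v u))"
      by (simp add: matrix_vector_mul_assoc matrix_mul_assoc)
    then show "x \<in> Fix (wconj w s)" using u iw by (simp add: Fix_def wconj_def)
  qed
qed

lemma Fix_inj_Refl: "s \<in> Refl \<Longrightarrow> t \<in> Refl \<Longrightarrow> Fix s = Fix t \<Longrightarrow> s = t"
  using Refl_cases Fix_inj by metis

lemma stab_conj: "w \<in> WH3 \<Longrightarrow> s \<in> Refl \<Longrightarrow> stabilizes w (Hyp s) \<Longrightarrow> wconj w s = s"
  using Fix_conj[of w s] conj_Refl[of w s] Fix_inj_Refl[of "wconj w s" s] by (simp add: stabilizes_def)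

lemma conj_self: "s \<in> Refl \<Longrightarrow> wconj s t = s ** t ** s"
  by (simp add: wconj_def Refl_inv)

lemma trans_comm: "s \<in> Refl \<Longrightarrow> s' \<in> Refl \<Longrightarrow> transversal s s' \<Longrightarrow> s ** s' = s' ** s"
proof (rule ccontr)
  assume s: "s \<in> Refl" and s': "s' \<in> Refl" and tr: "transversal s s'" and nc: "s ** s' \<noteq> s' ** s"
  let ?r = "s ** s' ** s"
  have r: "?r \<in> Refl" using conj_Refl[OF Refl_WH3[OF s] s'] conj_self[OF s] by simp
  have "Hyp s \<inter> Hyp s' \<subseteq> Hyp ?r"
    by (auto simp: Fix_def matrix_vector_mul_assoc[symmetric])
  then have "Hyp ?r = Hyp s \<or> Hyp ?r = Hyp s'" using tr r unfolding transversal_def by blast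
  then have "?r = s \<or> ?r = s'" using Fix_inj_Refl[OF r s] Fix_inj_Refl[OF r s'] by blast
  moreover have "?r \<noteq> s"
  proof
    assume "?r = s"
    have "s' = (s ** s) ** s' ** (s ** s)" using Refl_sq[OF s] by simp
    also have "\<dots> = s ** ?r ** s" by (simp add: matrix_mul_assoc)
    also have "\<dots> = s" using \<open>?r = s\<close> Refl_sq[OF s] by (simp add: matrix_mul_assoc)
    finally show False using tr by (simp add: transversal_def)
  qed
  moreover have "?r \<noteq> s'"
  proof
    assume "?r = s'"
    have "s ** s' = s ** s' ** (s ** s)" using Refl_sq[OF s] by simp
    also have "\<dots> = ?r ** s" by (simp add: matrix_mul_assoc)
    finally show False using \<open>?r = s'\<close> nc by simp
  qed
  ultimately show False by blast
qed

lemma comm_transversal: "s \<in> Refl \<Longrightarrow> s' \<in> Refl \<Longrightarrow> s \<noteq> s' \<Longrightarrow> s ** s' = s' ** s \<Longrightarrow> transversal s s'"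
proof -
  assume s: "s \<in> Refl" and s': "s' \<in> Refl" and ne: "s \<noteq> s'" and c: "s ** s' = s' ** s"
  obtain i j where ij: "i < 15" "j < 15" "s = Mi i" "s' = Mi j" using Refl_cases s s' by metis
  have "i \<noteq> j" using ne ij by auto
  have "tab!i!j = j" using comm_tab[OF ij(1,2)] c ij by simp
  then obtain e where e: "Mi i *v e = e" "Mi j *v e = e" "\<forall>k<15. k \<noteq> i \<and> k \<noteq> j \<longrightarrow> Mi k *v e \<noteq> e"
    using Kedge[OF ij(1,2) \<open>i \<noteq> j\<close>] by blast
  show ?thesis unfolding transversal_def
  proof (intro conjI ballI impI)
    show "Hyp s \<noteq> Hyp s'" using Fix_inj_Refl[OF s s'] ne by blast
    fix r assume r: "r \<in> Refl" and sub: "Hyp s \<inter> Hyp s' \<subseteq> Hyp r"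
    obtain k where k: "k < 15" "r = Mi k" using Refl_cases r by metis
    have "e \<in> Hyp s \<inter> Hyp s'" using e ij by (simp add: Fix_def)
    then have "Mi k *v e = e" using sub k by (auto simp: Fix_def)
    then have "k = i \<or> k = j" using e(3) k by blast
    then show "Hyp r = Hyp s \<or> Hyp r = Hyp s'" using k ij by auto
  qed
qed

lemma noncross_ncomm: "s \<in> Refl \<Longrightarrow> s' \<in> Refl \<Longrightarrow> s \<noteq> s' \<Longrightarrow> noncrossing_edge (Hyp s \<inter> Hyp s') \<Longrightarrow> s ** s' \<noteq> s' ** s"
  using comm_transversal unfolding noncrossing_edge_def crossing_edge_def by blast

lemma Rset_single: "s \<in> Refl \<Longrightarrow> s' \<in> Refl \<Longrightarrow> s \<noteq> s' \<Longrightarrow> s ** s' \<noteq> s' ** s \<Longrightarrow>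
   \<exists>r0\<in>Refl. Rset s s' = {r0} \<and> r0 ** s' ** r0 = s"
proof -
  assume s: "s \<in> Refl" and s': "s' \<in> Refl" and ne: "s \<noteq> s'" and nc: "s ** s' \<noteq> s' ** s"
  obtain i j where ij: "i < 15" "j < 15" "s = Mi i" "s' = Mi j" using Refl_cases s s' by metis
  have "i \<noteq> j" using ne ij by auto
  have "tab!i!j \<noteq> j" using comm_tab[OF ij(1,2)] nc ij by simp
  note u = Kuq[OF ij(1,2) \<open>i \<noteq> j\<close> this]
  let ?k = "uq!i!j"
  have "Rset s s' = {Mi ?k}"
  proof
    show "Rset s s' \<subseteq> {Mi ?k}"
    proof
      fix r assume "r \<in> Rset s s'"
      then have r: "r \<in> Refl" "r ** s' ** r = s" by (auto simp: Rset_def)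
      obtain k where k: "k < 15" "r = Mi k" using Refl_cases r(1) by metis
      have "Mi (tab!k!j) = Mi i" using Mtab[OF k(1) ij(2)] r(2) k ij by simp
      then have "tab!k!j = i" using Mi_inj tab_lt[OF k(1) ij(2)] ij(1) by blast
      then show "r \<in> {Mi ?k}" using u k by auto
    qed
    show "{Mi ?k} \<subseteq> Rset s s'"
      using u Mtab[of ?k j] ij Mi_Refl[of ?k] by (auto simp: Rset_def)
  qed
  then show ?thesis using u Mtab[of ?k j] ij Mi_Refl[of ?k] by auto
qed

lemma inv_one: "matrix_inv (mat 1 :: mat3) = mat 1"
  using inv_unique[of "mat 1" "mat 1::mat3"] by simp

lemma E4_cls:
  assumes s: "s \<in> Refl" and t: "t \<in> Refl" and c: "cls_of s = cls_of t"
  shows "E4 \<tau> s = E4 \<tau> t"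
proof (rule ext)
  fix x show "E4 \<tau> s x = E4 \<tau> t x" unfolding E4_formula[OF s] E4_formula[OF t] c by (rule refl)
qed

lemma Sm_E4: "s \<in> Refl \<Longrightarrow> Sm (E4 \<tau> s v) = (\<tau> - 1) * v (cls_of s) + Sm v"
  using cls_in finite_Classes by (simp add: Sm_def E4_formula if_distrib cong: if_cong)

lemma is_rep_T4: "is_rep \<tau> T4 (E4 \<tau>)"
  unfolding is_rep_def
proof (intro conjI ballI impI allI)
  fix w v assume "w \<in> WH3" "v \<in> Uspace"
  show "T4 w v \<in> Uspace" by (simp add: Uspace_def T4_def lin_op_def)
next
  fix s v assume "s \<in> Refl" "v \<in> Uspace"
  show "E4 \<tau> s v \<in> Uspace" by (simp add: Uspace_def E4_def lin_op_def)
next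
  fix v assume v: "v \<in> Uspace"
  show "T4 (mat 1) v = v"
    using v by (auto simp: T4_formula[OF WH3.one] inv_one pc_one Uspace_def)
next
  fix w1 w2 v assume w1: "w1 \<in> WH3" and w2: "w2 \<in> WH3" and "v \<in> Uspace"
  note i1 = WH3_inv[OF w1] and i2 = WH3_inv[OF w2]
  show "T4 w1 (T4 w2 v) = T4 (w1 ** w2) v"
    by (rule ext) (simp add: T4_formula w1 w2 WH3_mult inv_mult pc_comp i1 i2 pc_Classes)
next
  fix s v assume s: "s \<in> Refl" and "v \<in> Uspace"
  have c: "wconj s s = s" using Refl_sq[OF s] by (simp add: conj_self[OF s])
  show "T4 s (E4 \<tau> s v) = E4 \<tau> s v" using T4_E4_fix[OF Refl_WH3[OF s] s c] .
  show "E4 \<tau> s (T4 s v) = E4 \<tau> s v" using E4_T4_fix[OF Refl_WH3[OF s] s c] .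
next
  fix w s v assume w: "w \<in> WH3" and s: "s \<in> Refl" and h: "stabilizes w (Hyp s) \<and> noncrossing_edge (Hyp s \<inter> Fix w)"
    and "v \<in> Uspace"
  have c: "wconj w s = s" using stab_conj[OF w s] h by blast
  show "T4 w (E4 \<tau> s v) = E4 \<tau> s v" using T4_E4_fix[OF w s c] .
  show "E4 \<tau> s (T4 w v) = E4 \<tau> s v" using E4_T4_fix[OF w s c] .
next
  fix s v assume s: "s \<in> Refl" and "v \<in> Uspace"
  show "E4 \<tau> s (E4 \<tau> s v) = (\<lambda>q. \<tau> * E4 \<tau> s v q)" using E4_E4[OF s] .
next
  fix w s v assume w: "w \<in> WH3" and s: "s \<in> Refl" and "v \<in> Uspace"
  show "T4 w (E4 \<tau> s v) = E4 \<tau> (w ** s ** matrix_inv w) (T4 w v)"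
    using rel8[OF w s] by (simp add: wconj_def)
next
  fix s s' v assume s: "s \<in> Refl" and s': "s' \<in> Refl" and tr: "transversal s s'" and "v \<in> Uspace"
  have "cls_of s = cls_of s'" using cls_eq[OF s s'] trans_comm[OF s s' tr] by simp
  then have e: "E4 \<tau> s = E4 \<tau> s'" using E4_cls[OF s s'] by simp
  show "E4 \<tau> s (E4 \<tau> s' v) = E4 \<tau> s' (E4 \<tau> s v)" by (simp add: e)
next
  fix s s' v assume s: "s \<in> Refl" and s': "s' \<in> Refl" and h: "s \<noteq> s' \<and> noncrossing_edge (Hyp s \<inter> Hyp s')"
    and "v \<in> Uspace"
  have nc: "s ** s' \<noteq> s' ** s" using noncross_ncomm[OF s s'] h by blast
  then obtain r0 where r0: "r0 \<in> Refl" "Rset s s' = {r0}" "r0 ** s' ** r0 = s"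
    using Rset_single[OF s s'] h by blast
  have w0: "r0 \<in> WH3" using Refl_WH3[OF r0(1)] .
  have cj: "wconj r0 s' = s" using r0(3) conj_self[OF r0(1)] by simp
  have cj2: "wconj r0 s = s'"
  proof -
    have "wconj r0 s = r0 ** (r0 ** s' ** r0) ** r0" using r0(3) conj_self[OF r0(1)] by simp
    also have "\<dots> = (r0 ** r0) ** s' ** (r0 ** r0)" by (simp add: matrix_mul_assoc)
    finally show ?thesis using Refl_sq[OF r0(1)] by simp
  qed
  have ncl: "cls_of s \<noteq> cls_of s'" using cls_eq[OF s s'] nc by simp
  have key: "E4 \<tau> s (E4 \<tau> s' v) = E4 \<tau> s (T4 r0 v)"
  proof -
    have a: "E4 \<tau> s' v (cls_of s) = 0" using ncl by (simp add: E4_formula[OF s'])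
    have b: "T4 r0 v (cls_of s) = v (cls_of s')" using T4_at_cls[OF w0 s', of v] cj by simp
    show ?thesis
      unfolding E4_formula[OF s, where v="E4 \<tau> s' v"] E4_formula[OF s, where v="T4 r0 v"]
      unfolding a b Sm_E4[OF s'] Sm_T4[OF w0] by (simp only: mult_zero_right add_0)
  qed
  have t: "T4 r0 (E4 \<tau> s' v) = E4 \<tau> s (T4 r0 v)" using rel8[OF w0 s'] cj by simp
  show "E4 \<tau> s (E4 \<tau> s' v) = (\<lambda>q. \<Sum>r\<in>Rset s s'. T4 r (E4 \<tau> s' v) q)"
    using key t r0(2) by simp
  show "E4 \<tau> s (E4 \<tau> s' v) = E4 \<tau> s (\<lambda>q. \<Sum>r\<in>Rset s s'. T4 r v q)"
    using key r0(2) by simp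
qed



lemma ubasis_U: "p \<in> Classes \<Longrightarrow> ubasis p \<in> Uspace"
  by (auto simp: Uspace_def ubasis_def)

lemma T4_ubasis: "w \<in> WH3 \<Longrightarrow> p \<in> Classes \<Longrightarrow> T4 w (ubasis p) = ubasis (pc w p)"
proof
  fix q assume w: "w \<in> WH3" and p: "p \<in> Classes"
  show "T4 w (ubasis p) q = ubasis (pc w p) q"
  proof (cases "q \<in> Classes")
    case True
    have "pc (matrix_inv w) q = p \<longleftrightarrow> q = pc w p" using pc_inv1[OF w p] pc_inv2[OF w True] by metis
    then show ?thesis using True by (simp add: T4_formula[OF w] ubasis_def)
  next
    case False
    then have "q \<noteq> pc w p" using pc_Classes[OF w p] by auto
    then show ?thesis using False by (simp add: T4_formula[OF w] ubasis_def)
  qed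
qed

lemma conj_conj: "a \<in> WH3 \<Longrightarrow> b \<in> WH3 \<Longrightarrow> wconj a (wconj b x) = wconj (a ** b) x"
  using conj_comp by simp

lemma conj0: "s \<in> Refl \<Longrightarrow> \<exists>u\<in>WH3. s = wconj u (Mi 0)"
proof -
  assume "s \<in> Refl"
  then obtain w i where w: "w \<in> WH3" "s = w ** sgen i ** matrix_inv w" by (auto simp: Refl_def)
  have m6: "Mi 6 \<in> WH3" and m5: "Mi 5 \<in> WH3" using Refl_WH3 Mi_Refl by auto
  have g: "\<exists>u\<in>WH3. Mi (ix i) = wconj u (Mi 0)"
  proof -
    have c1: "Mi 1 = wconj (Mi 6) (Mi 0)"
      using Mtab[of 6 0] conj_self[OF Mi_Refl[of 6]] by (simp add: tab_def)
    have c2: "Mi 2 = wconj (Mi 5) (Mi 1)"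
      using Mtab[of 5 1] conj_self[OF Mi_Refl[of 5]] by (simp add: tab_def)
    have c0: "Mi 0 = wconj (mat 1) (Mi 0)" by (simp add: wconj_def inv_one)
    have "ix i = 0 \<or> ix i = 1 \<or> ix i = 2" using three_cases[of i] by auto
    then show ?thesis using c0 c1 c2 conj_conj[OF m5 m6] WH3.one m6 WH3_mult[OF m6 m5] by metis
  qed
  then obtain u where u: "u \<in> WH3" "Mi (ix i) = wconj u (Mi 0)" by blast
  have "s = wconj w (sgen i)" using w by (simp add: wconj_def)
  also have "\<dots> = wconj (w ** u) (Mi 0)" using u conj_conj[OF w(1) u(1)] by (simp add: sgen_Mi)
  finally show ?thesis using WH3_mult[OF u(1) w(1)] by blast
qed

lemma trans_cls: "p \<in> Classes \<Longrightarrow> q \<in> Classes \<Longrightarrow> \<exists>w\<in>WH3. pc w p = q"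
proof -
  assume "p \<in> Classes" "q \<in> Classes"
  then obtain a b where ab: "a \<in> Refl" "b \<in> Refl" "p = cls_of a" "q = cls_of b" by (auto simp: Classes_def)
  obtain u where u: "u \<in> WH3" "a = wconj u (Mi 0)" using conj0[OF ab(1)] by blast
  obtain u' where u': "u' \<in> WH3" "b = wconj u' (Mi 0)" using conj0[OF ab(2)] by blast
  have iu: "matrix_inv u \<in> WH3" using WH3_inv[OF u(1)] by simp
  let ?w = "u' ** matrix_inv u"
  have w: "?w \<in> WH3" using WH3_mult[OF iu u'(1)] .
  have "wconj ?w a = wconj u' (wconj (matrix_inv u) (wconj u (Mi 0)))"
    using u conj_comp[OF u'(1) iu] by simp
  also have "\<dots> = b" using conj_inv1[OF u(1)] u' by simp
  finally have "wconj ?w a = b" .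
  then have "pc ?w p = q" using pc_cls[OF w ab(1)] ab by simp
  then show ?thesis using w by blast
qed

lemma span_all:
  assumes W: "csubspace W" and B: "\<forall>p\<in>Classes. ubasis p \<in> W"
  shows "Uspace \<subseteq> W"
proof
  fix v assume v: "v \<in> Uspace"
  have "F \<subseteq> Classes \<Longrightarrow> (\<lambda>q. \<Sum>p\<in>F. v p * ubasis p q) \<in> W" if "finite F" for F
  using that proof (induction F rule: finite_induct)
    case empty then show ?case using W by (simp add: csubspace_def)
  next
    case (insert x F)
    have a: "(\<lambda>q. v x * ubasis x q) \<in> W" using W B insert.prems by (simp add: csubspace_def)
    have b: "(\<lambda>q. \<Sum>p\<in>F. v p * ubasis p q) \<in> W" using insert by simp
    have add: "\<And>x y. x \<in> W \<Longrightarrow> y \<in> W \<Longrightarrow> (\<lambda>q. x q + y q) \<in> W"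
      using W unfolding csubspace_def by blast
    show ?case using add[OF a b] insert.hyps by simp
  qed
  then have "(\<lambda>q. \<Sum>p\<in>Classes. v p * ubasis p q) \<in> W" using finite_Classes by simp
  moreover have "(\<lambda>q. \<Sum>p\<in>Classes. v p * ubasis p q) = v"
  proof
    fix q show "(\<Sum>p\<in>Classes. v p * ubasis p q) = v q"
    proof (cases "q \<in> Classes")
      case True
      have "(\<Sum>p\<in>Classes. v p * ubasis p q) = (\<Sum>p\<in>Classes. if p = q then v p else 0)"
        by (rule sum.cong) (auto simp: ubasis_def)
      then show ?thesis using True finite_Classes by simp
    next
      case False
      then show ?thesis using v by (auto simp: Uspace_def ubasis_def intro!: sum.neutral)
    qed
  qed
  ultimately show "v \<in> W" by simp
qed

lemma E4_ubasis: "s \<in> Refl \<Longrightarrow> E4 \<tau> s v = (\<lambda>q. ((\<tau> - 1) * v (cls_of s) + Sm v) * ubasis (cls_of s) q)"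
  by (rule ext) (simp add: E4_formula ubasis_def)

lemma two_classes: "\<exists>p1 p2. p1 \<in> Classes \<and> p2 \<in> Classes \<and> p1 \<noteq> p2"
proof -
  have "Classes \<noteq> {}" using card_Classes by auto
  then obtain p1 where p1: "p1 \<in> Classes" by auto
  have "card (Classes - {p1}) = 4" using card_Classes p1 finite_Classes by simp
  then have "Classes - {p1} \<noteq> {}" by (metis card.empty zero_neq_numeral)
  then obtain p2 where "p2 \<in> Classes - {p1}" by auto
  then show ?thesis using p1 by auto
qed

lemma irr_pos:
  assumes t1: "\<tau> \<noteq> 1" and t4: "\<tau> \<noteq> -4"
  shows "rep_irreducible T4 (E4 \<tau>)"
  unfolding rep_irreducible_def
proof (intro conjI allI impI)
  obtain p where p: "p \<in> Classes" using two_classes by blast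
  show "Uspace \<noteq> {\<lambda>_. 0}"
  proof
    assume "Uspace = {\<lambda>_. 0}"
    then have "ubasis p = (\<lambda>_. 0)" using ubasis_U[OF p] by auto
    then have "ubasis p p = 0" by simp
    then show False by (simp add: ubasis_def)
  qed
  fix W assume h: "csubspace W \<and> W \<subseteq> Uspace \<and> (\<forall>w\<in>WH3. \<forall>v\<in>W. T4 w v \<in> W) \<and> (\<forall>s\<in>Refl. \<forall>v\<in>W. E4 \<tau> s v \<in> W)"
  then have W: "csubspace W" and WU: "W \<subseteq> Uspace" and WT: "\<forall>w\<in>WH3. \<forall>v\<in>W. T4 w v \<in> W"
    and WE: "\<forall>s\<in>Refl. \<forall>v\<in>W. E4 \<tau> s v \<in> W" by auto
  show "W = {\<lambda>_. 0} \<or> W = Uspace"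
  proof (cases "W = {\<lambda>_. 0}")
    case True then show ?thesis by simp
  next
    case False
    have "(\<lambda>_. 0) \<in> W" using W by (simp add: csubspace_def)
    then obtain v where v: "v \<in> W" "v \<noteq> (\<lambda>_. 0)" using False by blast
    have vU: "v \<in> Uspace" using v WU by auto
    show ?thesis
    proof (cases "\<exists>s\<in>Refl. (\<tau> - 1) * v (cls_of s) + Sm v \<noteq> 0")
      case True
      then obtain s where s: "s \<in> Refl" and a: "(\<tau> - 1) * v (cls_of s) + Sm v \<noteq> 0" by blast
      define a where "a = (\<tau> - 1) * v (cls_of s) + Sm v"
      have "E4 \<tau> s v \<in> W" using WE s v by blast
      then have e1: "(\<lambda>q. a * ubasis (cls_of s) q) \<in> W" using E4_ubasis[OF s] a_def by simp
      have scl: "\<And>c x. x \<in> W \<Longrightarrow> (\<lambda>q. c * x q) \<in> W"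
        using W unfolding csubspace_def by blast
      have "(\<lambda>q. (1/a) * (a * ubasis (cls_of s) q)) \<in> W" using scl[OF e1, of "1/a"] by blast
      then have u0: "ubasis (cls_of s) \<in> W" using a a_def by simp
      have "\<forall>p\<in>Classes. ubasis p \<in> W"
      proof
        fix p assume p: "p \<in> Classes"
        obtain w where w: "w \<in> WH3" "pc w (cls_of s) = p" using trans_cls[OF cls_in[OF s] p] by blast
        have "T4 w (ubasis (cls_of s)) \<in> W" using WT w u0 by blast
        then show "ubasis p \<in> W" using T4_ubasis[OF w(1) cls_in[OF s]] w by simp
      qed
      then have "Uspace \<subseteq> W" using span_all[OF W] by blast
      then show ?thesis using WU by blast
    next
      case False
      then have z: "\<forall>p\<in>Classes. (\<tau> - 1) * v p + Sm v = 0" by (auto simp: Classes_def)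
      have "(\<Sum>p\<in>Classes. (\<tau> - 1) * v p + Sm v) = 0" using z by simp
      then have "(\<tau> - 1) * Sm v + 5 * Sm v = 0"
        using card_Classes by (simp add: sum.distrib sum_distrib_left[symmetric] Sm_def)
      then have "(\<tau> + 4) * Sm v = 0" by (simp add: algebra_simps)
      moreover have "\<tau> + 4 \<noteq> 0" using t4 eq_neg_iff_add_eq_0[of \<tau> 4] by simp
      ultimately have S0: "Sm v = 0" by simp
      have "v = (\<lambda>_. 0)"
      proof
        fix q show "v q = 0"
        proof (cases "q \<in> Classes")
          case True then have "(\<tau> - 1) * v q = 0" using z S0 by auto
          then show ?thesis using t1 by simp
        next
          case False then show ?thesis using vU by (simp add: Uspace_def)
        qed
      qed
      then show ?thesis using v by simp
    qed
  qed
qed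

definition ind :: "complex \<Rightarrow> vecU" where "ind c = (\<lambda>q. if q \<in> Classes then c else 0)"

lemma irr_neg1: "\<not> rep_irreducible T4 (E4 1)"
proof
  assume r: "rep_irreducible T4 (E4 1)"
  define W where "W = {v \<in> Uspace. Sm v = 0}"
  obtain p1 p2 where p: "p1 \<in> Classes" "p2 \<in> Classes" "p1 \<noteq> p2" using two_classes by blast
  have cs: "csubspace W"
    unfolding csubspace_def W_def Sm_def Uspace_def
    by (auto simp: sum.distrib sum_distrib_left[symmetric])
  have sub: "W \<subseteq> Uspace" by (auto simp: W_def)
  have inT: "\<forall>w\<in>WH3. \<forall>v\<in>W. T4 w v \<in> W"
    by (auto simp: W_def Sm_T4) (auto simp: Uspace_def T4_def lin_op_def)
  have E0: "E4 1 s v = (\<lambda>_. 0)" if "s \<in> Refl" "v \<in> W" for s v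
    using that by (auto simp: E4_formula W_def)
  have inE: "\<forall>s\<in>Refl. \<forall>v\<in>W. E4 1 s v \<in> W"
    using E0 cs by (simp add: csubspace_def)
  have "W = {\<lambda>_. 0} \<or> W = Uspace" using r cs sub inT inE unfolding rep_irreducible_def by blast
  moreover have "W \<noteq> {\<lambda>_. 0}"
  proof
    assume "W = {\<lambda>_. 0}"
    let ?x = "\<lambda>q. ubasis p1 q - ubasis p2 q"
    have "?x \<in> Uspace" using p by (auto simp: Uspace_def ubasis_def)
    moreover have "Sm ?x = 0"
      using p finite_Classes by (simp add: Sm_def sum_subtractf ubasis_def)
    ultimately have "?x \<in> W" by (simp add: W_def)
    then have xz: "?x = (\<lambda>_. 0)" using \<open>W = {\<lambda>_. 0}\<close> by simp
    have z: "ubasis p1 p1 - ubasis p2 p1 = 0" using fun_cong[OF xz, of p1] by simp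
    have "ubasis p1 p1 = 1" "ubasis p2 p1 = 0" using p by (simp_all add: ubasis_def)
    then show False using z by simp
  qed
  moreover have "W \<noteq> Uspace"
  proof
    assume "W = Uspace"
    then have "ubasis p1 \<in> W" using ubasis_U[OF p(1)] by simp
    then have "Sm (ubasis p1) = 0" by (simp add: W_def)
    then show False using p finite_Classes by (simp add: Sm_def ubasis_def)
  qed
  ultimately show False by blast
qed

lemma irr_neg4: "\<not> rep_irreducible T4 (E4 (-4))"
proof
  assume r: "rep_irreducible T4 (E4 (-4))"
  define W where "W = range ind"
  obtain p1 p2 where p: "p1 \<in> Classes" "p2 \<in> Classes" "p1 \<noteq> p2" using two_classes by blast
  have Sind: "Sm (ind c) = 5 * c" for c
    using card_Classes by (simp add: Sm_def ind_def)
  have cs: "csubspace W"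
    unfolding csubspace_def W_def
  proof (intro conjI ballI allI)
    show "(\<lambda>_. 0) \<in> range ind" by (rule range_eqI[of _ _ 0]) (simp add: ind_def)
    fix x y assume "x \<in> range ind" "y \<in> range ind"
    then obtain a b where "x = ind a" "y = ind b" by auto
    then show "(\<lambda>q. x q + y q) \<in> range ind" by (intro range_eqI[of _ _ "a + b"]) (auto simp: ind_def)
  next
    fix c x assume "x \<in> range ind"
    then obtain a where "x = ind a" by auto
    then show "(\<lambda>q. c * x q) \<in> range ind" by (intro range_eqI[of _ _ "c * a"]) (auto simp: ind_def)
  qed
  have sub: "W \<subseteq> Uspace" by (auto simp: W_def ind_def Uspace_def)
  have inT: "\<forall>w\<in>WH3. \<forall>v\<in>W. T4 w v \<in> W"
  proof (intro ballI)
    fix w v assume w: "w \<in> WH3" and "v \<in> W"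
    then obtain c where c: "v = ind c" by (auto simp: W_def)
    have "T4 w v = ind c"
    proof
      fix q show "T4 w v q = ind c q"
        using pc_Classes[OF conjunct1[OF WH3_inv[OF w]]] c by (simp add: T4_formula[OF w] ind_def)
    qed
    then show "T4 w v \<in> W" by (simp add: W_def)
  qed
  have inE: "\<forall>s\<in>Refl. \<forall>v\<in>W. E4 (-4) s v \<in> W"
  proof (intro ballI)
    fix s v assume s: "s \<in> Refl" and "v \<in> W"
    then obtain c where c: "v = ind c" by (auto simp: W_def)
    have "E4 (-4) s v = ind 0"
    proof
      fix q show "E4 (-4) s v q = ind 0 q"
        using cls_in[OF s] c Sind[of c] by (simp add: E4_formula[OF s] ind_def)
    qed
    then show "E4 (-4) s v \<in> W" by (simp add: W_def)
  qed
  have "W = {\<lambda>_. 0} \<or> W = Uspace" using r cs sub inT inE unfolding rep_irreducible_def by blast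
  moreover have "W \<noteq> {\<lambda>_. 0}"
  proof
    assume "W = {\<lambda>_. 0}"
    then have "ind 1 = (\<lambda>_. 0)" by (auto simp: W_def)
    then have "ind 1 p1 = 0" by simp
    then show False using p by (simp add: ind_def)
  qed
  moreover have "W \<noteq> Uspace"
  proof
    assume "W = Uspace"
    then have "ubasis p1 \<in> W" using ubasis_U[OF p(1)] by simp
    then obtain c where "ubasis p1 = ind c" by (auto simp: W_def)
    then have "ubasis p1 p1 = ind c p1" "ubasis p1 p2 = ind c p2" by simp_all
    then show False using p by (simp add: ubasis_def ind_def)
  qed
  ultimately show False by blast
qed

theorem lemma7p3:
  fixes \<tau> :: complex
  shows "is_rep \<tau> T4 (E4 \<tau>) \<and>
         (rep_irreducible T4 (E4 \<tau>) \<longleftrightarrow> (\<tau> - 1) ^ 4 * (\<tau> + 4) \<noteq> 0)"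
proof
  show "is_rep \<tau> T4 (E4 \<tau>)" by (rule is_rep_T4)
  have h4: "\<tau> = -4 \<longleftrightarrow> \<tau> + 4 = 0" by (rule eq_neg_iff_add_eq_0)
  have e: "(\<tau> - 1) ^ 4 * (\<tau> + 4) \<noteq> 0 \<longleftrightarrow> \<tau> \<noteq> 1 \<and> \<tau> \<noteq> -4"
    using h4 by auto
  show "rep_irreducible T4 (E4 \<tau>) \<longleftrightarrow> (\<tau> - 1) ^ 4 * (\<tau> + 4) \<noteq> 0"
    unfolding e using irr_pos irr_neg1 irr_neg4 by blast
qed


end
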